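(* Let $a,k,\tilde t,b,c\in\mathbb{C}^*$ be generic parameters satisfying $kbc=qa\tilde t$. Then for all integers $0\le m\le N$, $$\sum_{n=m}^{N}M_{Nn}(a,k)\,D_n(a;b,c)\,M_{nm}(\tilde t,a)=D_N\big(k;q\tilde t/c,q\tilde t/b\big)\,M_{Nm}(\tilde t,k)\,D_m(\tilde t;b,c).$$ Equivalently, for lower-triangular matrices $M(a,k)=(M_{nm}(a,k))_{n,m\ge0}$ and diagonal matrices $D(a;b,c)=\operatorname{diag}(D_n(a;b,c))_{n\ge0}$, $$M(a,k)\,D(a;b,c)\,M(\tilde t,a)=D\big(k;q\tilde t/c,q\tilde t/b\big)\,M(\tilde t,k)\,D(\tilde t;b,c).$$
   Context: Fix $p,q\in\mathbb{C}$ with $0<|p|,|q|<1$. Notation: $(z;p)_\infty=\prod_{j\ge0}(1-zp^j)$; $\theta(z;p)=(z;p)_\infty(p/z;p)_\infty$. The elliptic Pochhammer symbol is $\theta(z)_n=\prod_{j=0}^{n-1}\theta(zq^j;p)$ for $n\ge0$, and $\theta(z_1,\dots,z_r)_n=\prod_i\theta(z_i)_n$. For $0\le m\le N$ define $$M_{Nm}(a,k)=\frac{\theta(k)_{N+m}\,\theta(k/a)_{N-m}}{\theta(qa)_{N+m}\,\theta(q)_{N-m}}\,\frac{\theta(aq^{2m};p)}{\theta(a;p)}\,a^{N-m},$$ and set $M_{Nm}(a,k)=0$ for $m>N$. Also define $$D_n(a;b,c)=\frac{\theta(b,c)_n}{\theta(aq/b,aq/c)_n}\Big(\frac{aq}{bc}\Big)^n.$$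 *)

theory Defs
  imports "HOL-Analysis.Analysis"
begin

definition qpoch_inf :: "complex \<Rightarrow> complex \<Rightarrow> complex" where
  "qpoch_inf z p = (\<Prod>j. (1 - z * p ^ j))"

definition etheta :: "complex \<Rightarrow> complex \<Rightarrow> complex" where
  "etheta z p = qpoch_inf z p * qpoch_inf (p / z) p"

definition epoch :: "complex \<Rightarrow> complex \<Rightarrow> complex \<Rightarrow> nat \<Rightarrow> complex" where
  "epoch p q z n = (\<Prod>j<n. etheta (z * q ^ j) p)"

definition Mmat :: "complex \<Rightarrow> complex \<Rightarrow> nat \<Rightarrow> nat \<Rightarrow> complex \<Rightarrow> complex \<Rightarrow> complex" where
  "Mmat p q N m a k =
     (if m \<le> N then
        (epoch p q k (N + m) * epoch p q (k / a) (N - m))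
        / (epoch p q (q * a) (N + m) * epoch p q q (N - m))
        * (etheta (a * q ^ (2 * m)) p / etheta a p) * a ^ (N - m)
      else 0)"

definition Dmat :: "complex \<Rightarrow> complex \<Rightarrow> nat \<Rightarrow> complex \<Rightarrow> complex \<Rightarrow> complex \<Rightarrow> complex" where
  "Dmat p q n a b c =
     (epoch p q b n * epoch p q c n) / (epoch p q (a * q / b) n * epoch p q (a * q / c) n)
     * (a * q / (b * c)) ^ n"

end

theory Submission
  imports Defs "HOL-Complex_Analysis.Complex_Analysis"
begin

lemma qp_abs_conv:
  fixes p z :: complex assumes "norm p < 1"
  shows "abs_convergent_prod (\<lambda>j. 1 - z * p ^ j)"
proof (rule summable_imp_abs_convergent_prod)
  have "summable (\<lambda>i. norm z * norm p ^ i)"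
    using assms by (intro summable_mult summable_geometric) simp
  then show "summable (\<lambda>i. norm (1 - z * p ^ i - 1))"
    by (simp add: norm_mult norm_power)
qed

lemma qp_conv:
  fixes p z :: complex assumes "norm p < 1"
  shows "convergent_prod (\<lambda>j. 1 - z * p ^ j)"
  using abs_convergent_prod_imp_convergent_prod qp_abs_conv[OF assms] by blast

lemma qp_zero_iff:
  fixes p z :: complex assumes "norm p < 1"
  shows "qpoch_inf z p = 0 \<longleftrightarrow> (\<exists>j. z * p ^ j = 1)"
proof -
  have "(\<lambda>j. 1 - z * p ^ j) has_prod qpoch_inf z p"
    unfolding qpoch_inf_def using convergent_prod_has_prod qp_conv[OF assms] by blast
  from has_prod_eq_0_iff[OF this] show ?thesis
    by (metis (mono_tags, lifting) eq_iff_diff_eq_0 rangeE rangeI)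
qed

lemma qp_Suc:
  fixes p z :: complex assumes "norm p < 1"
  shows "qpoch_inf z p = (1 - z) * qpoch_inf (z * p) p"
proof (cases "z = 1")
  case True
  then have "qpoch_inf z p = 0" using qp_zero_iff[OF assms, of z] by (metis mult.right_neutral power_0)
  then show ?thesis using True by simp
next
  case False
  have "(\<Prod>n. (\<lambda>j. 1 - z * p ^ j) (Suc n)) = qpoch_inf z p / (1 - z)"
    using prodinf_split_head[OF qp_conv[OF assms, of z]] False unfolding qpoch_inf_def by simp
  moreover have "(\<Prod>n. (\<lambda>j. 1 - z * p ^ j) (Suc n)) = qpoch_inf (z * p) p"
    unfolding qpoch_inf_def by (simp add: mult_ac)
  ultimately show ?thesis using False by (simp add: field_simps)
qed

lemma qp_holomorphic:
  fixes p :: complex assumes "norm p < 1"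
  shows "(\<lambda>z. qpoch_inf z p) holomorphic_on A"
proof (rule holomorphic_on_subset)
  define P where "P = (\<lambda>N z. \<Prod>n<N. 1 - z * p ^ n)"
  have ul: "uniform_limit (cball 0 R) P (\<lambda>z. qpoch_inf z p) sequentially" if R: "R > 0" for R
  proof -
    have uc: "uniformly_convergent_on (cball 0 R) P"
      unfolding P_def
    proof (rule uniformly_convergent_on_prod')
      show "uniformly_convergent_on (cball 0 R) (\<lambda>N z. \<Sum>n<N. norm (1 - z * p ^ n - 1))"
      proof (rule Weierstrass_m_test'_ev)
        show "\<forall>\<^sub>F n in sequentially. \<forall>z\<in>cball 0 R. norm (norm (1 - z * p ^ n - 1)) \<le> R * norm p ^ n"
          by (intro always_eventually allI ballI)
             (simp add: norm_mult norm_power mult_right_mono)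
        show "summable (\<lambda>n. R * norm p ^ n)"
          using assms by (intro summable_mult summable_geometric) simp
      qed
    qed (auto intro!: continuous_intros)
    obtain g where g: "uniform_limit (cball 0 R) P g sequentially"
      using uc by (auto simp: uniformly_convergent_on_def)
    also have "?this \<longleftrightarrow> uniform_limit (cball 0 R) P (\<lambda>z. qpoch_inf z p) sequentially"
    proof (intro uniform_limit_cong)
      fix z :: complex assume "z \<in> cball 0 R"
      with g have "(\<lambda>n. P (Suc n) z) \<longlonglongrightarrow> g z"
        by (metis tendsto_uniform_limitI filterlim_sequentially_Suc)
      moreover have "(\<lambda>n. P (Suc n) z) \<longlonglongrightarrow> qpoch_inf z p"
        using convergent_prod_LIMSEQ[OF qp_conv[OF assms, of z]] unfolding P_def lessThan_Suc_atMost
        by (simp add: qpoch_inf_def)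
      ultimately show "g z = qpoch_inf z p"
        using tendsto_unique by force
    qed auto
    finally show ?thesis .
  qed
  show "(\<lambda>z. qpoch_inf z p) holomorphic_on UNIV"
  proof (rule holomorphic_uniform_sequence)
    fix z :: complex
    have *: "uniform_limit (cball 0 (norm z + 1)) P (\<lambda>z. qpoch_inf z p) sequentially"
      by (rule ul) (auto intro: add_nonneg_pos)
    hence "uniform_limit (cball z 1) P (\<lambda>z. qpoch_inf z p) sequentially"
      by (rule uniform_limit_on_subset) (simp add: cball_subset_cball_iff)
    thus "\<exists>d>0. cball z d \<subseteq> UNIV \<and> uniform_limit (cball z d) P (\<lambda>z. qpoch_inf z p) sequentially"
      by (intro exI[of _ 1]) auto
  qed (auto intro!: holomorphic_intros simp: P_def)
qed auto

lemma periodic_const: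
  fixes p :: complex and g :: "complex \<Rightarrow> complex"
  assumes p: "0 < norm p" "norm p < 1"
    and hol: "g holomorphic_on (- {0})"
    and per: "\<And>x. x \<noteq> 0 \<Longrightarrow> g (p * x) = g x"
  shows "\<exists>C. \<forall>x. x \<noteq> 0 \<longrightarrow> g x = C"
proof -
  define \<tau> where "\<tau> = Ln p"
  have p0: "p \<noteq> 0" using p by auto
  have et: "exp \<tau> = p" unfolding \<tau>_def using p0 by simp
  define \<sigma> where "\<sigma> = Re \<tau>"
  have sig: "\<sigma> = ln (norm p)" unfolding \<sigma>_def \<tau>_def using p0 by simp
  have sig0: "\<sigma> < 0" unfolding sig using p by simp
  define h where "h = (\<lambda>w. g (exp w))"
  have hper1: "h (w + \<tau>) = h w" for w
    unfolding h_def by (simp add: exp_add et per mult.commute)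
  have hpern: "h (w + of_nat n * \<tau>) = h w" for w n
  proof (induction n)
    case 0 then show ?case by simp
  next
    case (Suc n)
    have "h (w + of_nat (Suc n) * \<tau>) = h ((w + of_nat n * \<tau>) + \<tau>)"
      by (simp add: algebra_simps)
    also have "\<dots> = h w" using hper1 Suc by simp
    finally show ?case .
  qed
  have hperi: "h (w - of_int k * \<tau>) = h w" for w k
  proof (cases "k \<ge> 0")
    case True
    then obtain n where n: "k = int n" by (metis nonneg_eq_int)
    have "h w = h ((w - of_int k * \<tau>) + of_nat n * \<tau>)" by (simp add: n)
    also have "\<dots> = h (w - of_int k * \<tau>)" by (rule hpern)
    finally show ?thesis by simp
  next
    case False
    then obtain n where n: "k = - int n" by (metis neg_int_cases nat_less_le zero_less_imp_eq_int linorder_not_le)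
    have "h (w - of_int k * \<tau>) = h (w + of_nat n * \<tau>)" by (simp add: n)
    also have "\<dots> = h w" by (rule hpern)
    finally show ?thesis .
  qed
  define K where "K = {z::complex. norm p \<le> norm z \<and> norm z \<le> 1}"
  have Kc: "compact K"
  proof -
    have "K = cball 0 1 - ball 0 (norm p)" unfolding K_def by (auto simp: dist_norm)
    then show ?thesis by (auto intro!: compact_diff)
  qed
  have K0: "K \<subseteq> - {0}" unfolding K_def using p by auto
  have "continuous_on K g"
    using holomorphic_on_imp_continuous_on[OF holomorphic_on_subset[OF hol K0]] .
  then have "compact (g ` K)" using Kc by (rule compact_continuous_image)
  then obtain B where B: "\<And>z. z \<in> K \<Longrightarrow> norm (g z) \<le> B"
    by (meson bounded_iff compact_imp_bounded imageI)
  have hb: "norm (h w) \<le> B" for w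
  proof -
    define k where "k = floor (Re w / \<sigma>)"
    have k1: "of_int k \<le> Re w / \<sigma>" and k2: "Re w / \<sigma> < of_int k + 1"
      unfolding k_def by linarith+
    define w' where "w' = w - of_int k * \<tau>"
    have rw': "Re w' = Re w - of_int k * \<sigma>" unfolding w'_def \<sigma>_def by simp
    have a1: "of_int k * \<sigma> \<ge> Re w" using k1 sig0 by (simp add: pos_divide_le_eq neg_le_divide_eq mult.commute)
    have a2: "Re w > (of_int k + 1) * \<sigma>" using k2 sig0 by (simp add: neg_divide_less_eq mult.commute)
    have "Re w' \<le> 0" using rw' a1 by simp
    moreover have "Re w' \<ge> \<sigma>" using rw' a2 by (simp add: algebra_simps)
    ultimately have "exp w' \<in> K"
    proof -
      assume r1: "Re w' \<le> 0" and r2: "Re w' \<ge> \<sigma>"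
      have "norm p = exp \<sigma>" unfolding sig using p0 by simp
      also have "\<dots> \<le> exp (Re w')" using r2 by simp
      finally show ?thesis unfolding K_def using r1 by simp
    qed
    then have "norm (h w') \<le> B" unfolding h_def by (rule B)
    then show ?thesis unfolding w'_def hperi .
  qed
  have holh: "h holomorphic_on UNIV"
    unfolding h_def
    by (rule holomorphic_on_compose_gen[OF holomorphic_on_exp hol, unfolded o_def]) auto
  have "bounded (range h)" using hb by (auto simp: bounded_iff)
  then have "h constant_on UNIV" using Liouville_theorem[OF holh] by blast
  then obtain C where C: "\<And>w. h w = C" by (auto simp: constant_on_def)
  show ?thesis
  proof (intro exI allI impI)
    fix x :: complex assume "x \<noteq> 0"
    then have "g x = h (Ln x)" unfolding h_def by simp
    then show "g x = C" using C by simp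
  qed
qed

context
  fixes p :: complex
  assumes p0: "0 < norm p" and p1: "norm p < 1"
begin

lemma pnz: "p \<noteq> 0" using p0 by auto

definition Rth :: "complex \<Rightarrow> complex" where
  "Rth z = qpoch_inf (z * p) p * qpoch_inf (p / z) p"

lemma th_factor: "etheta z p = (1 - z) * Rth z"
  unfolding etheta_def Rth_def using qp_Suc[OF p1, of z] by simp

lemma th_shift: "z \<noteq> 0 \<Longrightarrow> etheta (p * z) p = - (1 / z) * etheta z p"
proof -
  assume z: "z \<noteq> 0"
  have "etheta (p * z) p = qpoch_inf (p * z) p * qpoch_inf (1 / z) p"
    unfolding etheta_def using pnz z by simp
  also have "qpoch_inf (1 / z) p = (1 - 1 / z) * qpoch_inf (p / z) p"
    using qp_Suc[OF p1, of "1/z"] by simp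
  finally have "etheta (p * z) p = (1 - 1/z) * Rth z" unfolding Rth_def by (simp add: mult_ac)
  also have "\<dots> = - (1 / z) * ((1 - z) * Rth z)" using z by (simp add: field_simps)
  finally show ?thesis by (simp add: th_factor)
qed

lemma th_inv: "z \<noteq> 0 \<Longrightarrow> etheta (1 / z) p = - (1 / z) * etheta z p"
proof -
  assume z: "z \<noteq> 0"
  have "etheta (1 / z) p = etheta (p * z) p"
    unfolding etheta_def using pnz z by (simp add: mult.commute)
  then show ?thesis using th_shift[OF z] by simp
qed

lemma th_one: "etheta 1 p = 0" using th_factor[of 1] by simp

lemma Rth_one: "Rth 1 \<noteq> 0"
proof -
  have "norm (p * p ^ j) < 1" for j
  proof -
    have "norm (p * p ^ j) = norm p ^ Suc j" by (simp add: norm_mult norm_power)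
    also have "\<dots> < 1" using p0 p1 by (rule power_Suc_less_one)
    finally show ?thesis .
  qed
  then have "p * p ^ j \<noteq> 1" for j by (metis norm_one order_less_irrefl)
  then show ?thesis unfolding Rth_def using qp_zero_iff[OF p1] by auto
qed

lemma th_zero: assumes "z \<noteq> 0" "etheta z p = 0"
  shows "(\<exists>j. z = p ^ Suc j) \<or> (\<exists>j. z * p ^ j = 1)"
proof -
  have "qpoch_inf z p = 0 \<or> qpoch_inf (p / z) p = 0" using assms(2) unfolding etheta_def by simp
  then show ?thesis
  proof
    assume "qpoch_inf z p = 0" then show ?thesis using qp_zero_iff[OF p1] by auto
  next
    assume "qpoch_inf (p / z) p = 0"
    then obtain j where "p / z * p ^ j = 1" using qp_zero_iff[OF p1] by auto
    then have "z = p ^ Suc j" using assms(1) by (simp add: field_simps)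
    then show ?thesis by auto
  qed
qed

lemma th_holo: "(\<lambda>z. etheta z p) holomorphic_on (- {0})"
  unfolding etheta_def
  by (intro holomorphic_intros holomorphic_on_compose_gen[OF _ qp_holomorphic[OF p1], unfolded o_def]) auto

lemma Rth_holo: "Rth holomorphic_on (- {0})"
  unfolding Rth_def
  by (intro holomorphic_intros holomorphic_on_compose_gen[OF _ qp_holomorphic[OF p1], unfolded o_def]) auto

end

lemma conn_punct: "connected (- {0::complex})"
  by (intro path_connected_imp_connected path_connected_punctured_universe) simp

lemma lim_transfer:
  fixes G :: "complex \<Rightarrow> complex"
  assumes c: "c \<noteq> 0" and x0: "x0 \<noteq> 0"
    and lim: "(G \<longlongrightarrow> L) (at (x0 * c))"
    and per: "\<And>y. y \<noteq> 0 \<Longrightarrow> G (y * c) = G y"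
  shows "(G \<longlongrightarrow> L) (at x0)"
proof -
  have f: "filterlim (\<lambda>y. y * c) (at (x0 * c)) (at x0)"
  proof (rule filterlim_atI)
    show "((\<lambda>y. y * c) \<longlongrightarrow> x0 * c) (at x0)" by (intro tendsto_intros)
    show "\<forall>\<^sub>F y in at x0. y * c \<noteq> x0 * c" using c by (auto simp: eventually_at_filter)
  qed
  have "((\<lambda>y. G (y * c)) \<longlongrightarrow> L) (at x0)"
    using filterlim_compose[OF lim f] .
  moreover have "\<forall>\<^sub>F y in at x0. G (y * c) = G y"
  proof -
    have "\<forall>\<^sub>F y in at x0. y \<noteq> 0"
      using x0 by (intro eventually_neq_at_within) 
    then show ?thesis by eventually_elim (rule per)
  qed
  ultimately show ?thesis by (rule Lim_transform_eventually)
qed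

context
  fixes p :: complex
  assumes p0: "0 < norm p" and p1: "norm p < 1"
begin

abbreviation "T z \<equiv> etheta z p"

lemma th_inv': "z \<noteq> 0 \<Longrightarrow> w = 1 / z \<Longrightarrow> T w = - w * T z"
  using th_inv[OF p0 p1] by simp

lemma th_shift': "z \<noteq> 0 \<Longrightarrow> w = p * z \<Longrightarrow> T w = - (1 / z) * T z"
  using th_shift[OF p0 p1] by simp

lemma Th_holo_comp: "f holomorphic_on S \<Longrightarrow> (\<And>x. x \<in> S \<Longrightarrow> f x \<noteq> 0) \<Longrightarrow> (\<lambda>x. T (f x)) holomorphic_on S"
  by (rule holomorphic_on_compose_gen[OF _ th_holo[OF p0 p1], unfolded o_def]) auto


lemma Rth_holo_comp: "f holomorphic_on S \<Longrightarrow> (\<And>x. x \<in> S \<Longrightarrow> f x \<noteq> 0) \<Longrightarrow> (\<lambda>x. Rth p (f x)) holomorphic_on S"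
  by (rule holomorphic_on_compose_gen[OF _ Rth_holo[OF p0 p1], unfolded o_def]) auto

lemma add_generic:
  assumes nz: "x \<noteq> 0" "y \<noteq> 0" "u \<noteq> 0" "v \<noteq> 0"
    and g1: "T (u * u) \<noteq> 0" and g2: "T (u * y) \<noteq> 0" and g3: "T (u / y) \<noteq> 0"
  shows "T (x * y) * T (x / y) * T (u * v) * T (u / v) - T (x * v) * T (x / v) * T (u * y) * T (u / y)
       = u / y * T (y * v) * T (y / v) * T (x * u) * T (x / u)"
proof -
  have pnz: "p \<noteq> 0" using p0 by auto
  define F where "F x = T (x * y) * T (x / y) * T (u * v) * T (u / v) - T (x * v) * T (x / v) * T (u * y) * T (u / y)" for x
  define den where "den x = T (x * u) * T (x / u)" for x
  define G where "G x = F x / den x" for x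
  have Fhol: "F holomorphic_on (- {0})" unfolding F_def using nz
    by (intro holomorphic_intros Th_holo_comp) auto
  have denhol: "den holomorphic_on (- {0})" unfolding den_def using nz
    by (intro holomorphic_intros Th_holo_comp) auto
  have Fp: "F (p * x) = F x / x ^ 2" if x: "x \<noteq> 0" for x
  proof -
    have e1: "T (p * x * y) = - (1 / (x * y)) * T (x * y)" by (rule th_shift') (use x nz in auto)
    have e2: "T (p * x / y) = - (1 / (x / y)) * T (x / y)" by (rule th_shift') (use x nz in auto)
    have e3: "T (p * x * v) = - (1 / (x * v)) * T (x * v)" by (rule th_shift') (use x nz in auto)
    have e4: "T (p * x / v) = - (1 / (x / v)) * T (x / v)" by (rule th_shift') (use x nz in auto)
    show ?thesis unfolding F_def e1 e2 e3 e4 using x nz by (simp add: field_simps power2_eq_square)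
  qed
  have denp: "den (p * x) = den x / x ^ 2" if x: "x \<noteq> 0" for x
  proof -
    have e1: "T (p * x * u) = - (1 / (x * u)) * T (x * u)" by (rule th_shift') (use x nz in auto)
    have e2: "T (p * x / u) = - (1 / (x / u)) * T (x / u)" by (rule th_shift') (use x nz in auto)
    show ?thesis unfolding den_def e1 e2 using x nz by (simp add: field_simps power2_eq_square)
  qed
  have Gp: "G (p * x) = G x" if x: "x \<noteq> 0" for x
  proof -
    have "G (p * x) = (F x / x^2) / (den x / x^2)" unfolding G_def using Fp[OF x] denp[OF x] by simp
    also have "\<dots> = G x" unfolding G_def using x by (simp add: divide_divide_eq_left')
    finally show ?thesis .
  qed
  have Gpn: "G (x * p ^ n) = G x" if x: "x \<noteq> 0" for x n
  proof (induction n)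
    case 0 then show ?case by simp
  next
    case (Suc n)
    have "G (x * p ^ Suc n) = G (p * (x * p ^ n))" by (simp add: mult_ac)
    also have "\<dots> = G (x * p ^ n)" by (rule Gp) (use x pnz in simp)
    finally show ?case using Suc by simp
  qed
  have Gpn': "G (x * (1 / p ^ n)) = G x" if x: "x \<noteq> 0" for x n
  proof -
    have "G x = G (x * (1 / p ^ n) * p ^ n)" using pnz by simp
    also have "\<dots> = G (x * (1 / p ^ n))" by (rule Gpn) (use x pnz in simp)
    finally show ?thesis by simp
  qed
  have Fu: "F u = 0" unfolding F_def by (simp add: mult_ac)
  have Fiu: "F (1 / u) = 0"
  proof -
    have a1: "T (1 / u * y) = - (1 / u * y) * T (u / y)" by (rule th_inv') (use nz in auto)
    have a2: "T (1 / u / y) = - (1 / u / y) * T (u * y)" by (rule th_inv') (use nz in auto)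
    have a3: "T (1 / u * v) = - (1 / u * v) * T (u / v)" by (rule th_inv') (use nz in auto)
    have a4: "T (1 / u / v) = - (1 / u / v) * T (u * v)" by (rule th_inv') (use nz in auto)
    show ?thesis unfolding F_def a1 a2 a3 a4 using nz by (simp add: field_simps)
  qed

  have isc_T: "isCont (\<lambda>z. T (f z)) z0" if "isCont f z0" "f z0 \<noteq> 0" for f z0
  proof -
    have "isCont (\<lambda>z. T z) (f z0)"
      using holomorphic_on_imp_continuous_on[OF th_holo[OF p0 p1]] that(2)
      by (simp add: continuous_on_eq_continuous_at open_Compl)
    then show ?thesis using continuous_at_compose[OF that(1)] by (simp add: o_def)
  qed
  have isc_R: "isCont (\<lambda>z. Rth p (f z)) z0" if "isCont f z0" "f z0 \<noteq> 0" for f z0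
  proof -
    have "isCont (\<lambda>z. Rth p z) (f z0)"
      using holomorphic_on_imp_continuous_on[OF Rth_holo[OF p0 p1]] that(2)
      by (simp add: continuous_on_eq_continuous_at open_Compl)
    then show ?thesis using continuous_at_compose[OF that(1)] by (simp add: o_def)
  qed
  have pole: "\<exists>F1. isCont F1 a \<and> (\<forall>z. F z = (z - a) * F1 z)" if a: "a \<noteq> 0" "F a = 0" for a
  proof -
    define F1 where "F1 = (\<lambda>z. if z = a then deriv F a else (F z - F a) / (z - a))"
    have "F1 holomorphic_on (- {0})" unfolding F1_def
      by (rule pole_lemma[OF Fhol]) (use a in \<open>simp add: interior_open open_Compl\<close>)
    then have "isCont F1 a" using a
      by (metis ComplI closed_singleton holomorphic_on_imp_continuous_on continuous_on_eq_continuous_at open_Compl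
          singletonD)
    moreover have "F z = (z - a) * F1 z" for z
      unfolding F1_def using a by (cases "z = a") auto
    ultimately show ?thesis by blast
  qed
  have limu: "\<exists>L. (G \<longlongrightarrow> L) (at u)"
  proof -
    obtain F1 where F1: "isCont F1 u" "\<And>z. F z = (z - u) * F1 z" using pole[OF nz(3) Fu] by blast
    define H where "H z = - u * F1 z / (T (z * u) * Rth p (z / u))" for z
    have "isCont H u" unfolding H_def
      using nz g1 Rth_one[OF p0 p1]
      by (intro continuous_intros isc_T isc_R F1(1)) auto
    then have "(H \<longlongrightarrow> H u) (at u)" by (simp add: isCont_def)
    moreover have "\<forall>\<^sub>F z in at u. H z = G z"
    proof -
      have "\<forall>\<^sub>F z in at u. z \<noteq> u" by (rule eventually_neq_at_within) 
      then show ?thesis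
      proof eventually_elim
        case (elim z)
        have d: "den z = (z - u) * (- (1 / u) * (T (z * u) * Rth p (z / u)))"
          unfolding den_def th_factor[OF p0 p1, of "z / u"] using nz by (simp add: field_simps)
        have "G z = ((z - u) * F1 z) / ((z - u) * (- (1 / u) * (T (z * u) * Rth p (z / u))))"
          unfolding G_def d F1(2) ..
        also have "\<dots> = F1 z / (- (1 / u) * (T (z * u) * Rth p (z / u)))"
          using elim by (simp del: mult_minus_left mult_minus_right)
        also have "\<dots> = H z" unfolding H_def using nz
          by (cases "T (z * u) * Rth p (z / u) = 0") (auto simp: field_simps)
        finally show ?case by simp
      qed
    qed
    ultimately show ?thesis using Lim_transform_eventually by blast
  qed
  have limiu: "\<exists>L. (G \<longlongrightarrow> L) (at (1 / u))"
  proof -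
    obtain F1 where F1: "isCont F1 (1 / u)" "\<And>z. F z = (z - 1 / u) * F1 z" using pole[OF _ Fiu] nz by auto
    define H where "H z = - F1 z / (u * Rth p (z * u) * T (z / u))" for z
    have t: "T (1 / u / u) \<noteq> 0"
    proof -
      have "T (1 / u / u) = - (1 / u / u) * T (u * u)" by (rule th_inv') (use nz in auto)
      then show ?thesis using g1 nz by simp
    qed
    have "isCont H (1 / u)" unfolding H_def
      using nz t Rth_one[OF p0 p1]
      by (intro continuous_intros isc_T isc_R F1(1)) auto
    then have "(H \<longlongrightarrow> H (1 / u)) (at (1 / u))" by (simp add: isCont_def)
    moreover have "\<forall>\<^sub>F z in at (1 / u). H z = G z"
    proof -
      have "\<forall>\<^sub>F z in at (1 / u). z \<noteq> 1 / u" by (rule eventually_neq_at_within) 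
      then show ?thesis
      proof eventually_elim
        case (elim z)
        have d: "den z = (z - 1 / u) * (- (u * Rth p (z * u) * T (z / u)))"
          unfolding den_def th_factor[OF p0 p1, of "z * u"] using nz by (simp add: field_simps)
        have "G z = ((z - 1 / u) * F1 z) / ((z - 1 / u) * (- (u * Rth p (z * u) * T (z / u))))"
          unfolding G_def d F1(2) ..
        also have "\<dots> = F1 z / (- (u * Rth p (z * u) * T (z / u)))"
          using elim by (simp del: mult_minus_left mult_minus_right)
        also have "\<dots> = H z" unfolding H_def using nz by simp
        finally show ?case by simp
      qed
    qed
    ultimately show ?thesis using Lim_transform_eventually by blast
  qed

  have limall: "\<exists>L. (G \<longlongrightarrow> L) (at x0)" if x0: "x0 \<noteq> 0" "den x0 = 0" for x0
  proof -
    have "T (x0 * u) = 0 \<or> T (x0 / u) = 0" using x0(2) unfolding den_def by simp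
    then show ?thesis
    proof
      assume "T (x0 * u) = 0"
      from th_zero[OF p0 p1 _ this] x0 nz
      consider j where "x0 * u = p ^ Suc j" | j where "x0 * u * p ^ j = 1" by auto
      then show ?thesis
      proof cases
        case (1 j)
        obtain L where L: "(G \<longlongrightarrow> L) (at (1 / u))" using limiu by blast
        have e: "x0 * (1 / p ^ Suc j) = 1 / u" using 1 nz pnz by (simp add: field_simps)
        have "(G \<longlongrightarrow> L) (at x0)"
        proof (rule lim_transfer[of "1 / p ^ Suc j"])
          show "1 / p ^ Suc j \<noteq> 0" using pnz by simp
          show "x0 \<noteq> 0" by (rule x0(1))
          show "(G \<longlongrightarrow> L) (at (x0 * (1 / p ^ Suc j)))" unfolding e by (rule L)
          fix y :: complex assume "y \<noteq> 0" then show "G (y * (1 / p ^ Suc j)) = G y" by (rule Gpn')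
        qed
        then show ?thesis by blast
      next
        case (2 j)
        obtain L where L: "(G \<longlongrightarrow> L) (at (1 / u))" using limiu by blast
        have e: "x0 * (p ^ j) = 1 / u" using 2 nz pnz by (simp add: field_simps)
        have "(G \<longlongrightarrow> L) (at x0)"
        proof (rule lim_transfer[of "p ^ j"])
          show "p ^ j \<noteq> 0" using pnz by simp
          show "x0 \<noteq> 0" by (rule x0(1))
          show "(G \<longlongrightarrow> L) (at (x0 * (p ^ j)))" unfolding e by (rule L)
          fix y :: complex assume "y \<noteq> 0" then show "G (y * (p ^ j)) = G y" by (rule Gpn)
        qed
        then show ?thesis by blast
      qed
    next
      assume "T (x0 / u) = 0"
      from th_zero[OF p0 p1 _ this] x0 nz
      consider j where "x0 / u = p ^ Suc j" | j where "x0 / u * p ^ j = 1" by auto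
      then show ?thesis
      proof cases
        case (1 j)
        obtain L where L: "(G \<longlongrightarrow> L) (at u)" using limu by blast
        have e: "x0 * (1 / p ^ Suc j) = u" using 1 nz pnz by (simp add: field_simps)
        have "(G \<longlongrightarrow> L) (at x0)"
        proof (rule lim_transfer[of "1 / p ^ Suc j"])
          show "1 / p ^ Suc j \<noteq> 0" using pnz by simp
          show "x0 \<noteq> 0" by (rule x0(1))
          show "(G \<longlongrightarrow> L) (at (x0 * (1 / p ^ Suc j)))" unfolding e by (rule L)
          fix y :: complex assume "y \<noteq> 0" then show "G (y * (1 / p ^ Suc j)) = G y" by (rule Gpn')
        qed
        then show ?thesis by blast
      next
        case (2 j)
        obtain L where L: "(G \<longlongrightarrow> L) (at u)" using limu by blast
        have e: "x0 * (p ^ j) = u" using 2 nz pnz by (simp add: field_simps)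
        have "(G \<longlongrightarrow> L) (at x0)"
        proof (rule lim_transfer[of "p ^ j"])
          show "p ^ j \<noteq> 0" using pnz by simp
          show "x0 \<noteq> 0" by (rule x0(1))
          show "(G \<longlongrightarrow> L) (at (x0 * (p ^ j)))" unfolding e by (rule L)
          fix y :: complex assume "y \<noteq> 0" then show "G (y * (p ^ j)) = G y" by (rule Gpn)
        qed
        then show ?thesis by blast
      qed
    qed
  qed

  have deny: "den y \<noteq> 0"
  proof -
    have "T (y / u) = - (y / u) * T (u / y)" by (rule th_inv') (use nz in auto)
    then show ?thesis unfolding den_def using nz g2 g3 by (simp add: mult.commute)
  qed
  have iso: "\<exists>r>0. ball x0 r \<subseteq> - {0} \<and> (\<forall>z\<in>ball x0 r - {x0}. den z \<noteq> 0)" if x0: "x0 \<noteq> 0" "den x0 = 0" for x0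
  proof -
    obtain r where "0 < r" "ball x0 r \<subseteq> - {0}" "\<And>z. z \<in> ball x0 r - {x0} \<Longrightarrow> den z \<noteq> 0"
      by (rule isolated_zeros[OF denhol open_Compl[OF closed_singleton] conn_punct, of x0 y])
         (use x0 nz deny in auto)
    then show ?thesis by blast
  qed
  define Gh where "Gh x = (if den x = 0 then Lim (at x) G else G x)" for x
  have Ghlim: "(G \<longlongrightarrow> Gh x0) (at x0)" if x0: "x0 \<noteq> 0" "den x0 = 0" for x0
  proof -
    obtain L where L: "(G \<longlongrightarrow> L) (at x0)" using limall[OF x0] by blast
    then have "Lim (at x0) G = L" by (intro tendsto_Lim) simp_all
    then show ?thesis using L x0 unfolding Gh_def by simp
  qed
  have Ghloc: "\<exists>S. open S \<and> x0 \<in> S \<and> Gh holomorphic_on S" if x0: "x0 \<noteq> 0" for x0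
  proof (cases "den x0 = 0")
    case True
    obtain r where r: "r > 0" "ball x0 r \<subseteq> - {0}" "\<forall>z\<in>ball x0 r - {x0}. den z \<noteq> 0"
      using iso[OF x0 True] by blast
    have "G holomorphic_on ball x0 r - {x0}" unfolding G_def
      using r by (intro holomorphic_intros holomorphic_on_subset[OF Fhol] holomorphic_on_subset[OF denhol]) auto
    then have "(\<lambda>z. if z = x0 then Gh x0 else G z) holomorphic_on ball x0 r"
      by (rule removable_singularity) (use Ghlim[OF x0 True] in auto)
    moreover have "(\<lambda>z. if z = x0 then Gh x0 else G z) z = Gh z" if "z \<in> ball x0 r" for z
      using r that unfolding Gh_def by auto
    ultimately have "Gh holomorphic_on ball x0 r" by (rule holomorphic_transform)
    then show ?thesis using r(1) by (intro exI[of _ "ball x0 r"]) auto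
  next
    case False
    define S where "S = - {0} \<inter> den -` (- {0})"
    have oS: "open S" unfolding S_def
      by (rule continuous_open_preimage[OF holomorphic_on_imp_continuous_on[OF denhol] open_Compl[OF closed_singleton] open_Compl[OF closed_singleton]])
    have "G holomorphic_on S" unfolding G_def S_def
      by (intro holomorphic_intros holomorphic_on_subset[OF Fhol] holomorphic_on_subset[OF denhol]) auto
    moreover have "G z = Gh z" if "z \<in> S" for z using that unfolding S_def Gh_def by auto
    ultimately have "Gh holomorphic_on S" by (rule holomorphic_transform)
    then show ?thesis using oS x0 False unfolding S_def by blast
  qed
  have Ghhol: "Gh holomorphic_on (- {0})"
    unfolding holomorphic_on_def
  proof
    fix x0 :: complex assume "x0 \<in> - {0}"
    then obtain S where S: "open S" "x0 \<in> S" "Gh holomorphic_on S" using Ghloc by auto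
    then have "Gh field_differentiable at x0" using holomorphic_on_imp_differentiable_at by blast
    then show "Gh field_differentiable at x0 within - {0}" using field_differentiable_at_within by blast
  qed
  have Ghp: "Gh (p * x) = Gh x" if x: "x \<noteq> 0" for x
  proof (cases "den x = 0")
    case True
    have dp: "den (p * x) = 0" using denp[OF x] True by simp
    have px: "p * x \<noteq> 0" using x pnz by simp
    have "(G \<longlongrightarrow> Gh x) (at (p * x))"
    proof (rule lim_transfer[of "1 / p"])
      show "1 / p \<noteq> 0" using pnz by simp
      show "p * x \<noteq> 0" by (rule px)
      show "(G \<longlongrightarrow> Gh x) (at (p * x * (1 / p)))" using Ghlim[OF x True] pnz by simp
      fix y :: complex assume "y \<noteq> 0" then show "G (y * (1 / p)) = G y" using Gpn'[of y 1] by simp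
    qed
    moreover have "(G \<longlongrightarrow> Gh (p * x)) (at (p * x))" by (rule Ghlim[OF px dp])
    ultimately show ?thesis using tendsto_unique[OF at_neq_bot] by blast
  next
    case False
    have "den (p * x) \<noteq> 0" using denp[OF x] False x by simp
    then show ?thesis unfolding Gh_def using False Gp[OF x] by simp
  qed
  obtain C where C: "\<And>x. x \<noteq> 0 \<Longrightarrow> Gh x = C" using periodic_const[OF p0 p1 Ghhol Ghp] by blast
  have FC: "F x = C * den x" if x: "x \<noteq> 0" "den x \<noteq> 0" for x
    using C[OF x(1)] x unfolding Gh_def G_def by (simp add: field_simps)
  have Cv: "C = u / y * T (y * v) * T (y / v)"
  proof -
    have a: "T (y / u) = - (y / u) * T (u / y)" by (rule th_inv') (use nz in auto)
    have "F y = C * den y" by (rule FC[OF nz(2) deny])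
    then have "- (T (y * v) * T (y / v) * T (u * y) * T (u / y)) = C * (T (u * y) * (- (y / u) * T (u / y)))"
      unfolding F_def den_def a using nz th_one[OF p0 p1] by (simp add: mult.commute)
    then have "(T (u * y) * T (u / y)) * (u / y * T (y * v) * T (y / v)) = (T (u * y) * T (u / y)) * C"
      using nz by (simp add: field_simps)
    moreover have K: "T (u * y) * T (u / y) \<noteq> 0" using g2 g3 by simp
    ultimately have "u / y * T (y * v) * T (y / v) = C" using mult_left_cancel[OF K] by blast
    then show ?thesis by simp
  qed
  have FCall: "F x = C * den x" if x: "x \<noteq> 0" for x
  proof (cases "den x = 0")
    case False then show ?thesis using FC x by blast
  next
    case True
    obtain r where r: "r > 0" "ball x r \<subseteq> - {0}" "\<forall>z\<in>ball x r - {x}. den z \<noteq> 0"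
      using iso[OF x True] by blast
    have ev: "\<forall>\<^sub>F z in at x. F z = C * den z"
    proof -
      have "\<forall>\<^sub>F z in at x. z \<in> ball x r - {x}"
        using r(1) by (intro eventually_at_in_open) auto
      then show ?thesis
      proof eventually_elim
        case (elim z)
        then have "z \<noteq> 0" "den z \<noteq> 0" using r by auto
        then show ?case by (rule FC)
      qed
    qed
    have cF: "isCont F x" using Fhol x
      by (metis ComplI closed_singleton holomorphic_on_imp_continuous_on continuous_on_eq_continuous_at open_Compl singletonD)
    have cd: "isCont den x" using denhol x
      by (metis ComplI closed_singleton holomorphic_on_imp_continuous_on continuous_on_eq_continuous_at open_Compl singletonD)
    have "((\<lambda>z. C * den z) \<longlongrightarrow> C * den x) (at x)" using cd by (intro tendsto_intros) (simp add: isCont_def)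
    then have "(F \<longlongrightarrow> C * den x) (at x)" using ev by (rule Lim_transform_eventually[OF _ eventually_mono]) auto
    moreover have "(F \<longlongrightarrow> F x) (at x)" using cF by (simp add: isCont_def)
    ultimately show ?thesis using tendsto_unique[OF at_neq_bot] by blast
  qed
  show ?thesis using FCall[OF nz(1)] unfolding F_def den_def Cv by (simp add: mult_ac)
qed

lemma th_zero_set: "{z. T z = 0} \<subseteq> {0} \<union> range (\<lambda>j. p ^ Suc j) \<union> range (\<lambda>j. 1 / p ^ j)"
proof
  fix z assume "z \<in> {z. T z = 0}"
  then have z: "T z = 0" by simp
  show "z \<in> {0} \<union> range (\<lambda>j. p ^ Suc j) \<union> range (\<lambda>j. 1 / p ^ j)"
  proof (cases "z = 0")
    case False
    from th_zero[OF p0 p1 False z] show ?thesis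
    proof
      assume "\<exists>j. z = p ^ Suc j" then show ?thesis by auto
    next
      assume "\<exists>j. z * p ^ j = 1"
      then obtain j where "z * p ^ j = 1" by blast
      then have "z = 1 / p ^ j" using p0 by (simp add: field_simps)
      then show ?thesis by auto
    qed
  qed simp
qed

lemma countable_zeros: "countable {z. T z = 0}"
  by (rule countable_subset[OF th_zero_set]) auto

lemma addition:
  assumes nz: "x \<noteq> 0" "y \<noteq> 0" "u \<noteq> 0" "v \<noteq> 0"
  shows "T (x * y) * T (x / y) * T (u * v) * T (u / v) - T (x * v) * T (x / v) * T (u * y) * T (u / y)
       = u / y * T (y * v) * T (y / v) * T (x * u) * T (x / u)"
proof (rule ccontr)
  define Z where "Z = {z. T z = 0}"
  define \<Phi> where "\<Phi> w = T (x * y) * T (x / y) * T (w * v) * T (w / v) - T (x * v) * T (x / v) * T (w * y) * T (w / y)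
       - w / y * T (y * v) * T (y / v) * T (x * w) * T (x / w)" for w
  assume "\<not> ?thesis"
  then have Pu: "\<Phi> u \<noteq> 0" unfolding \<Phi>_def by simp
  have hol: "\<Phi> holomorphic_on (- {0})" unfolding \<Phi>_def using nz
    by (intro holomorphic_intros Th_holo_comp) auto
  have "isCont \<Phi> u" using hol nz(3)
    by (metis ComplI closed_singleton holomorphic_on_imp_continuous_on continuous_on_eq_continuous_at open_Compl singletonD)
  then obtain e where e: "e > 0" "\<And>w. dist u w < e \<Longrightarrow> \<Phi> w \<noteq> 0"
    using continuous_at_avoid[of u \<Phi> 0] Pu by auto
  define r where "r = min e (norm u)"
  have r: "r > 0" unfolding r_def using e nz by simp
  have sub: "ball u r \<subseteq> {w. w * w \<in> Z} \<union> {w. w * y \<in> Z} \<union> {w. w / y \<in> Z}"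
  proof
    fix w assume w: "w \<in> ball u r"
    then have w0: "w \<noteq> 0" unfolding r_def by (auto simp: dist_norm)
    have "\<Phi> w \<noteq> 0" using w e(2) unfolding r_def by auto
    then have "\<not> (T (w * w) \<noteq> 0 \<and> T (w * y) \<noteq> 0 \<and> T (w / y) \<noteq> 0)"
      using add_generic[OF nz(1,2) w0 nz(4)] unfolding \<Phi>_def by auto
    then show "w \<in> {w. w * w \<in> Z} \<union> {w. w * y \<in> Z} \<union> {w. w / y \<in> Z}" unfolding Z_def by auto
  qed
  have cZ: "countable Z" unfolding Z_def by (rule countable_zeros)
  have c1: "countable {w. w * w \<in> Z}"
  proof (rule countable_subset)
    show "{w. w * w \<in> Z} \<subseteq> csqrt ` Z \<union> (\<lambda>z. - csqrt z) ` Z"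
    proof
      fix w assume "w \<in> {w. w * w \<in> Z}"
      then have wz: "w * w \<in> Z" by simp
      have eq: "w ^ 2 = (csqrt (w * w)) ^ 2" by (metis power2_csqrt power2_eq_square)
      have "w = csqrt (w * w) \<or> w = - csqrt (w * w)" using power2_eq_iff[of w "csqrt (w * w)"] eq by blast
      then show "w \<in> csqrt ` Z \<union> (\<lambda>z. - csqrt z) ` Z" using wz by auto
    qed
  qed (use cZ in auto)
  have c2: "countable {w. w * y \<in> Z}"
  proof (rule countable_subset)
    show "{w. w * y \<in> Z} \<subseteq> (\<lambda>z. z / y) ` Z"
    proof
      fix w assume "w \<in> {w. w * y \<in> Z}"
      then show "w \<in> (\<lambda>z. z / y) ` Z" using nz by (auto intro!: image_eqI[of _ _ "w * y"])
    qed
  qed (use cZ in auto)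
  have c3: "countable {w. w / y \<in> Z}"
  proof (rule countable_subset)
    show "{w. w / y \<in> Z} \<subseteq> (\<lambda>z. z * y) ` Z"
    proof
      fix w assume "w \<in> {w. w / y \<in> Z}"
      then show "w \<in> (\<lambda>z. z * y) ` Z" using nz by (auto intro!: image_eqI[of _ _ "w / y"])
    qed
  qed (use cZ in auto)
  have "countable (ball u r)" by (rule countable_subset[OF sub]) (use c1 c2 c3 in auto)
  then show False using uncountable_ball[OF r, of u] by simp
qed
end

lemma E0[simp]: "epoch p q z 0 = 1" unfolding epoch_def by simp

lemma ESuc: "epoch p q z (Suc n) = epoch p q z n * etheta (z * q ^ n) p"
  unfolding epoch_def by simp

lemma Eadd: "epoch p q z (m + n) = epoch p q z m * epoch p q (z * q ^ m) n"
proof (induction n)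
  case 0 then show ?case by simp
next
  case (Suc n)
  then show ?case by (simp add: ESuc mult_ac power_add)
qed

lemma Ehead: "epoch p q z (Suc n) = etheta z p * epoch p q (z * q) n"
  using Eadd[of p q z 1 n] by (simp add: epoch_def)

lemma Enz: "(\<And>i. i < n \<Longrightarrow> etheta (z * q ^ i) p \<noteq> 0) \<Longrightarrow> epoch p q z n \<noteq> 0"
  unfolding epoch_def by (simp add: prod_zero_iff)

context
  fixes p :: complex
  assumes p0: "0 < norm p" and p1: "norm p < 1"
begin

lemma core1:
  assumes nz: "a \<noteq> 0" "x \<noteq> 0" "q \<noteq> 0" "A \<noteq> 0" "B \<noteq> 0"
  shows "T p (x * a * (A * B)) * T p (x * (A / B)) * T p (a * (q * A)) * T p (q * A)
       = T p (x * A) * T p (x * a * A) * T p (q * A / B) * T p (a * (q * A * B))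
         + (q * A / B) * T p (x * a * (q * A * A)) * T p (a * B) * T p B * T p (x / q)"
proof -
  define s where "s = csqrt a"
  have s2: "s * s = a" unfolding s_def by (metis power2_csqrt power2_eq_square)
  have s0: "s \<noteq> 0" using s2 nz by auto
  have add: "T p ((s * (q * A)) * s) * T p ((s * (q * A)) / s) * T p ((x * s * A) * (s * B)) * T p ((x * s * A) / (s * B))
      - T p ((s * (q * A)) * (s * B)) * T p ((s * (q * A)) / (s * B)) * T p ((x * s * A) * s) * T p ((x * s * A) / s)
      = (x * s * A) / s * T p (s * (s * B)) * T p (s / (s * B)) * T p ((s * (q * A)) * (x * s * A)) * T p ((s * (q * A)) / (x * s * A))"
    by (rule addition[OF p0 p1]) (use nz s0 in auto)
  have e1: "(s * (q * A)) * s = a * (q * A)" using s2 by (simp add: algebra_simps)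
  have e2: "(s * (q * A)) / s = q * A" using s0 by simp
  have e3: "(x * s * A) * (s * B) = x * a * (A * B)" using s2 by (simp add: algebra_simps)
  have e4: "(x * s * A) / (s * B) = x * (A / B)" using s0 by simp
  have e5: "(s * (q * A)) * (s * B) = a * (q * A * B)" using s2 by (simp add: algebra_simps)
  have e6: "(s * (q * A)) / (s * B) = q * A / B" using s0 by simp
  have e7: "(x * s * A) * s = x * a * A" using s2 by (simp add: algebra_simps)
  have e8: "(x * s * A) / s = x * A" using s0 by simp
  have e9: "s * (s * B) = a * B" using s2 by (simp add: algebra_simps)
  have e10: "s / (s * B) = 1 / B" using s0 by simp
  have e11: "(s * (q * A)) * (x * s * A) = x * a * (q * A * A)" using s2 by (simp add: algebra_simps)
  have e12: "(s * (q * A)) / (x * s * A) = 1 / (x / q)" using s0 nz by (simp add: field_simps)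
  have e13: "(x * s * A) / s = x * A" using s0 by simp
  have i1: "T p (1 / B) = - (1 / B) * T p B" by (rule th_inv'[OF p0 p1]) (use nz in auto)
  have i2: "T p (1 / (x / q)) = - (1 / (x / q)) * T p (x / q)" by (rule th_inv'[OF p0 p1]) (use nz in auto)
  from add[unfolded e1 e2 e3 e4 e5 e6 e7 e8 e9 e10 e11 e12 i1 i2]
  show ?thesis using nz s0 by (simp add: field_simps)
qed


lemma core2:
  assumes nz: "A \<noteq> 0" "b \<noteq> 0" "c \<noteq> 0" "d \<noteq> 0"
  shows "T p A * T p (A / (b * c)) * T p (A / (b * d)) * T p (A / (c * d))
       = T p (A / (b * c * d)) * T p (A / b) * T p (A / c) * T p (A / d)
         + A / (b * c * d) * T p b * T p c * T p d * T p (A * A / (b * c * d))"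
proof -
  define r where "r = csqrt (b * c)"
  have r2: "r * r = b * c" unfolding r_def by (metis power2_csqrt power2_eq_square)
  have r0: "r \<noteq> 0" using r2 nz by auto
  have add: "T p ((A / r) * r) * T p ((A / r) / r) * T p ((A / (d * r)) * (b / r)) * T p ((A / (d * r)) / (b / r))
      - T p ((A / r) * (b / r)) * T p ((A / r) / (b / r)) * T p ((A / (d * r)) * r) * T p ((A / (d * r)) / r)
      = (A / (d * r)) / r * T p (r * (b / r)) * T p (r / (b / r)) * T p ((A / r) * (A / (d * r))) * T p ((A / r) / (A / (d * r)))"
    by (rule addition[OF p0 p1]) (use nz r0 in auto)
  have e1: "(A / r) * r = A" using r0 by simp
  have e2: "(A / r) / r = A / (b * c)" using r2 by (simp add: field_simps)
  have e3: "(A / (d * r)) * (b / r) = A / (c * d)" using r2 r0 nz by (simp add: field_simps)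
  have e4: "(A / (d * r)) / (b / r) = A / (b * d)" using r0 nz by (simp add: field_simps)
  have e5: "(A / r) * (b / r) = A / c" using r2 r0 nz by (simp add: field_simps)
  have e6: "(A / r) / (b / r) = A / b" using r0 nz by (simp add: field_simps)
  have e7: "(A / (d * r)) * r = A / d" using r0 nz by (simp add: field_simps)
  have e8: "(A / (d * r)) / r = A / (b * c * d)" using r2 r0 nz by (simp add: field_simps)
  have e9: "r * (b / r) = b" using r0 by simp
  have e10: "r / (b / r) = c" using r2 r0 nz by (simp add: field_simps)
  have e11: "(A / r) * (A / (d * r)) = A * A / (b * c * d)" using r2 r0 nz by (simp add: field_simps)
  have e12: "(A / r) / (A / (d * r)) = d" using r0 nz by (simp add: field_simps)
  from add[unfolded e1 e2 e3 e4 e5 e6 e7 e8 e9 e10 e11 e12]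
  show ?thesis using nz r0 by (simp add: field_simps)
qed
end

definition ftt :: "complex \<Rightarrow> complex \<Rightarrow> complex \<Rightarrow> complex \<Rightarrow> complex \<Rightarrow> complex \<Rightarrow> complex \<Rightarrow> nat \<Rightarrow> nat \<Rightarrow> complex" where
  "ftt p q a b c d x n j = etheta (a * q ^ (2 * j)) p / etheta a p
     * (epoch p q a j * epoch p q b j * epoch p q c j * epoch p q d j * epoch p q (x * a * q ^ n) j)
     / (epoch p q q j * epoch p q (a * q / b) j * epoch p q (a * q / c) j * epoch p q (a * q / d) j * epoch p q (a * q ^ Suc n) j)
     * (epoch p q x (n - j) / epoch p q q (n - j)) * x ^ j"

definition ftc :: "complex \<Rightarrow> complex \<Rightarrow> complex \<Rightarrow> complex \<Rightarrow> complex \<Rightarrow> complex \<Rightarrow> nat \<Rightarrow> complex" where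
  "ftc p q a b c d n = epoch p q (a * q) n * epoch p q (a * q / (b * c)) n * epoch p q (a * q / (b * d)) n * epoch p q (a * q / (c * d)) n
     / (epoch p q q n * epoch p q (a * q / b) n * epoch p q (a * q / c) n * epoch p q (a * q / d) n)"

context
  fixes p q a b c d x :: complex
  assumes p0: "0 < norm p" and p1: "norm p < 1" and q0: "q \<noteq> 0"
    and a0: "a \<noteq> 0" and b0: "b \<noteq> 0" and c0: "c \<noteq> 0" and d0: "d \<noteq> 0" and x0: "x \<noteq> 0"
    and rel: "b * c * d * x = a * q"
    and gA: "\<And>i. etheta (a * q ^ i) p \<noteq> 0"
    and gQ: "\<And>i. etheta (q * q ^ i) p \<noteq> 0"
    and gB: "\<And>i. etheta (a * q / b * q ^ i) p \<noteq> 0"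
    and gC: "\<And>i. etheta (a * q / c * q ^ i) p \<noteq> 0"
    and gD: "\<And>i. etheta (a * q / d * q ^ i) p \<noteq> 0"
begin

abbreviation "E \<equiv> epoch p q"

lemmas argsimps = algebra_simps power_add power2_eq_square mult_2 mult_2_right

definition "\<alpha> n = T p (x * q ^ n) / T p (q * q ^ n)"
definition "\<beta> n = T p (a * q) * T p (a * q ^ 2) * T p b * T p c * T p d * T p (x * a * q ^ (2 * n + 1)) * x * q ^ n
   / (T p (a * q ^ Suc n) * T p (q * q ^ n) * T p (a * q / b) * T p (a * q / c) * T p (a * q / d) * T p (a * q ^ Suc (Suc n)))"

lemma L0: "ftt p q a b c d x (Suc n) 0 = \<alpha> n * ftt p q a b c d x n 0"
  unfolding ftt_def \<alpha>_def by (simp add: ESuc mult_ac)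

lemma Ta: "T p a \<noteq> 0" using gA[of 0] by simp

lemma EQ: "E q n \<noteq> 0" by (rule Enz) (use gQ in \<open>simp add: mult.commute\<close>)
lemma EB: "E (a * q / b) n \<noteq> 0" by (rule Enz) (use gB in simp)
lemma EC: "E (a * q / c) n \<noteq> 0" by (rule Enz) (use gC in simp)
lemma ED: "E (a * q / d) n \<noteq> 0" by (rule Enz) (use gD in simp)
lemma EA: "E (a * q ^ k) n \<noteq> 0" by (rule Enz) (use gA in \<open>simp add: mult.assoc power_add[symmetric]\<close>)


lemma EAq: "E (a * q ^ k * q) n \<noteq> 0"
proof (rule Enz)
  fix i show "T p (a * q ^ k * q * q ^ i) \<noteq> 0" using gA[of "k + 1 + i"] by (simp add: argsimps)
qed
lemma EBq: "E (a * q / b * q) n \<noteq> 0"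
proof (rule Enz)
  fix i show "T p (a * q / b * q * q ^ i) \<noteq> 0" using gB[of "1 + i"] by (simp add: argsimps)
qed
lemma ECq: "E (a * q / c * q) n \<noteq> 0"
proof (rule Enz)
  fix i show "T p (a * q / c * q * q ^ i) \<noteq> 0" using gC[of "1 + i"] by (simp add: argsimps)
qed
lemma EDq: "E (a * q / d * q) n \<noteq> 0"
proof (rule Enz)
  fix i show "T p (a * q / d * q * q ^ i) \<noteq> 0" using gD[of "1 + i"] by (simp add: argsimps)
qed
lemma TB: "T p (a * q / b) \<noteq> 0" using gB[of 0] by simp
lemma TC: "T p (a * q / c) \<noteq> 0" using gC[of 0] by simp
lemma TD: "T p (a * q / d) \<noteq> 0" using gD[of 0] by simp
lemma Taq: "T p (a * q) \<noteq> 0" using gA[of 1] by simp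

lemma E2: "E z (Suc (Suc n)) = E z n * T p (z * q ^ n) * T p (z * q ^ Suc n)"
  by (simp add: ESuc)

lemma Eq2: "E (z * q ^ 2) n * (T p z * T p (z * q)) = E z n * T p (z * q ^ n) * T p (z * q ^ Suc n)"
proof -
  have "E z (2 + n) = E z 2 * E (z * q ^ 2) n" by (rule Eadd)
  moreover have "E z 2 = T p z * T p (z * q)" by (simp add: numeral_2_eq_2 ESuc)
  ultimately show ?thesis using E2[of z n] by (simp add: mult_ac)
qed

lemma Llast: "ftt p q a b c d x (Suc n) (Suc n) = \<beta> n * ftt p q (a * q ^ 2) (b * q) (c * q) (d * q) (x / q) n n"
proof -
  have r1: "T p (a * q ^ 2 * q ^ (2 * n)) = T p (a * q ^ (2 * Suc n))"
    by (simp add: argsimps)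
  have r2: "E (a * q ^ 2) n = E a n * T p (a * q ^ n) * T p (a * q ^ Suc n) / (T p a * T p (a * q))"
    using Eq2[of a n] Ta gA[of 1] by (simp add: field_simps)
  have r4: "E (x / q * (a * q ^ 2) * q ^ n) n = E (x * a * q ^ Suc n) n"
    using q0 by (simp add: argsimps)
  have r4b: "T p (x * a * q ^ Suc n * q ^ n) = T p (x * a * q ^ (2 * n + 1))"
    by (simp add: argsimps)
  have r6b: "E (a * q ^ 2 * q / (b * q)) n = E (a * q / b * q) n"
    using q0 by (simp add: argsimps)
  have r6c: "E (a * q ^ 2 * q / (c * q)) n = E (a * q / c * q) n"
    using q0 by (simp add: argsimps)
  have r6d: "E (a * q ^ 2 * q / (d * q)) n = E (a * q / d * q) n"
    using q0 by (simp add: argsimps)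
  have r7: "E (a * q ^ 2 * q ^ Suc n) n = E (a * q ^ Suc (Suc n) * q) n"
    by (simp add: argsimps)
  have nz: "E q n \<noteq> 0" "T p (q * q ^ n) \<noteq> 0" "E (a * q / b * q) n \<noteq> 0" "E (a * q / c * q) n \<noteq> 0" "E (a * q / d * q) n \<noteq> 0"
    "T p (a * q / b) \<noteq> 0" "T p (a * q / c) \<noteq> 0" "T p (a * q / d) \<noteq> 0"
    "E (a * q ^ Suc (Suc n) * q) n \<noteq> 0" "T p (a * q ^ Suc (Suc n)) \<noteq> 0" "T p (a * q ^ Suc n) \<noteq> 0"
    "T p a \<noteq> 0" "T p (a * q) \<noteq> 0" "T p (a * q ^ 2) \<noteq> 0"
    using EQ[of n] gQ[of n] EBq[of n] ECq[of n] EDq[of n] TB TC TD EAq[of "Suc (Suc n)" n] gA[of "Suc (Suc n)"]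
      gA[of "Suc n"] Ta Taq gA[of 2] by simp_all
  show ?thesis
    unfolding ftt_def \<beta>_def r1 r2 r4 r6b r6c r6d r7
    unfolding ESuc[of p q "x * a * q ^ Suc n"] r4b ESuc[of p q q n] Ehead[of p q b] Ehead[of p q c] Ehead[of p q d]
      ESuc[of p q a n] Ehead[of p q "a * q / b"] Ehead[of p q "a * q / c"] Ehead[of p q "a * q / d"]
      Ehead[of p q "a * q ^ Suc (Suc n)"]
    using nz q0 x0 by (simp add: field_simps)
qed

lemma Eq2': "E (a * q ^ 2) n = E a n * T p (a * q ^ n) * T p (a * q ^ Suc n) / (T p a * T p (a * q))"
  using Eq2[of a n] Ta gA[of 1] by (simp add: field_simps)

lemma Eshift: "T p z \<noteq> 0 \<Longrightarrow> E (z * q) n = E z n * T p (z * q ^ n) / T p z"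
  using ESuc[of p q z n] Ehead[of p q z n] by (simp add: field_simps)

lemma Lmid:
  assumes "i < n"
  shows "ftt p q a b c d x (Suc n) (Suc i) = \<alpha> n * ftt p q a b c d x n (Suc i)
          + \<beta> n * ftt p q (a * q ^ 2) (b * q) (c * q) (d * q) (x / q) n i"
proof -
  obtain l where n: "n = Suc (i + l)" using assms by (metis less_iff_Suc_add)
  have s1: "Suc n - Suc i = Suc l" "n - Suc i = l" "n - i = Suc l" using n by auto
  have r1: "T p (a * q ^ 2 * q ^ (2 * i)) = T p (a * q ^ (2 * Suc i))" by (simp add: argsimps)
  have r4: "E (x / q * (a * q ^ 2) * q ^ n) i = E (x * a * q ^ Suc n) i" using q0 by (simp add: argsimps)
  have r4': "E (x * a * q ^ n * q) i = E (x * a * q ^ Suc n) i" by (simp add: argsimps)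
  have r6b: "E (a * q ^ 2 * q / (b * q)) i = E (a * q / b * q) i" using q0 by (simp add: argsimps)
  have r6c: "E (a * q ^ 2 * q / (c * q)) i = E (a * q / c * q) i" using q0 by (simp add: argsimps)
  have r6d: "E (a * q ^ 2 * q / (d * q)) i = E (a * q / d * q) i" using q0 by (simp add: argsimps)
  have r7: "E (a * q ^ 2 * q ^ Suc n) i = E (a * q ^ Suc (Suc n) * q) i" by (simp add: argsimps)
  have r7': "E (a * q ^ Suc n * q) i = E (a * q ^ Suc (Suc n)) i" by (simp add: argsimps)
  have rxq: "E (x / q * q) l = E x l" using q0 by simp
  have sb: "E (a * q / b * q) i = E (a * q / b) i * T p (a * q / b * q ^ i) / T p (a * q / b)" by (rule Eshift[OF TB])
  have sc: "E (a * q / c * q) i = E (a * q / c) i * T p (a * q / c * q ^ i) / T p (a * q / c)" by (rule Eshift[OF TC])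
  have sd: "E (a * q / d * q) i = E (a * q / d) i * T p (a * q / d * q ^ i) / T p (a * q / d)" by (rule Eshift[OF TD])
  have sa: "E (a * q ^ Suc (Suc n) * q) i = E (a * q ^ Suc (Suc n)) i * T p (a * q ^ Suc (Suc n) * q ^ i) / T p (a * q ^ Suc (Suc n))"
    by (rule Eshift[OF gA])
  define Q where "Q = T p (a * q ^ (2 * Suc i)) / T p a * (E a i * T p (a * q ^ i)) * (T p b * E (b * q) i) * (T p c * E (c * q) i)
     * (T p d * E (d * q) i) * E (x * a * q ^ Suc n) i * E x l
     / (E q i * T p (q * q ^ i) * (E (a * q / b) i * T p (a * q / b * q ^ i)) * (E (a * q / c) i * T p (a * q / c * q ^ i))
        * (E (a * q / d) i * T p (a * q / d * q ^ i)) * E (a * q ^ Suc (Suc n)) i * E q l) * x ^ Suc i"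
  have nzs: "T p a \<noteq> 0" "E q i \<noteq> 0" "T p (q * q ^ i) \<noteq> 0" "E (a * q / b) i \<noteq> 0" "E (a * q / c) i \<noteq> 0"
    "E (a * q / d) i \<noteq> 0" "T p (a * q / b * q ^ i) \<noteq> 0" "T p (a * q / c * q ^ i) \<noteq> 0" "T p (a * q / d * q ^ i) \<noteq> 0"
    "E (a * q ^ Suc (Suc n)) i \<noteq> 0" "T p (a * q ^ Suc (Suc n) * q ^ i) \<noteq> 0" "E q l \<noteq> 0" "T p (q * q ^ l) \<noteq> 0"
    "T p (a * q ^ Suc n) \<noteq> 0" "T p (q * q ^ n) \<noteq> 0" "T p (a * q) \<noteq> 0" "T p (a * q ^ 2) \<noteq> 0"
    "T p (a * q / b) \<noteq> 0" "T p (a * q / c) \<noteq> 0" "T p (a * q / d) \<noteq> 0" "T p (a * q ^ Suc (Suc n)) \<noteq> 0"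
    "x \<noteq> 0" "q \<noteq> 0" "b \<noteq> 0" "c \<noteq> 0" "d \<noteq> 0" "a \<noteq> 0"
    using Ta EQ[of i] gQ[of i] EB[of i] EC[of i] ED[of i] gB[of i] gC[of i] gD[of i] EA[of "Suc (Suc n)" i] EQ[of l] gQ[of l]
      gA[of "Suc n"] gQ[of n] Taq gA[of 2] TB TC TD gA[of "Suc (Suc n)"] x0 q0 b0 c0 d0 a0 
    apply simp_all
    using gA[of "Suc (Suc n) + i"] by (simp add: argsimps)
  have X1: "ftt p q a b c d x (Suc n) (Suc i) = Q * (T p (x * a * q ^ Suc n * q ^ i) * T p (x * q ^ l)
              / (T p (a * q ^ Suc (Suc n) * q ^ i) * T p (q * q ^ l)))"
    unfolding ftt_def s1 Q_def
    unfolding ESuc[of p q a i] Ehead[of p q b i] Ehead[of p q c i] Ehead[of p q d i] ESuc[of p q "x * a * q ^ Suc n" i]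
      ESuc[of p q q i] ESuc[of p q "a * q / b" i] ESuc[of p q "a * q / c" i] ESuc[of p q "a * q / d" i]
      ESuc[of p q "a * q ^ Suc (Suc n)" i] ESuc[of p q x l] ESuc[of p q q l]
    using nzs by (simp add: field_simps)
  have X2: "\<alpha> n * ftt p q a b c d x n (Suc i) = Q * (\<alpha> n * (T p (x * a * q ^ n) / T p (a * q ^ Suc n)))"
    unfolding ftt_def s1 Q_def
    unfolding ESuc[of p q a i] Ehead[of p q b i] Ehead[of p q c i] Ehead[of p q d i] Ehead[of p q "x * a * q ^ n" i]
      ESuc[of p q q i] ESuc[of p q "a * q / b" i] ESuc[of p q "a * q / c" i] ESuc[of p q "a * q / d" i]
      Ehead[of p q "a * q ^ Suc n" i] r4' r7'
    using nzs by (simp add: field_simps)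
  have X3: "\<beta> n * ftt p q (a * q ^ 2) (b * q) (c * q) (d * q) (x / q) n i = Q * (q ^ n / q ^ i * T p (a * q ^ Suc i) * T p (q * q ^ i)
      * T p (x * a * q ^ (2 * n + 1)) * T p (x / q) / (T p (a * q ^ Suc n) * T p (q * q ^ n) * T p (a * q ^ Suc (Suc n) * q ^ i) * T p (q * q ^ l)))"
    unfolding ftt_def s1 Q_def \<beta>_def r1 Eq2' r4 r6b r6c r6d r7 sb sc sd sa
    unfolding Ehead[of p q "x / q" l] rxq ESuc[of p q q l]
    using nzs by (simp add: field_simps)
  have core: "T p (x * a * (q ^ n * q ^ Suc i)) * T p (x * (q ^ n / q ^ Suc i)) * T p (a * (q * q ^ n)) * T p (q * q ^ n)
       = T p (x * q ^ n) * T p (x * a * q ^ n) * T p (q * q ^ n / q ^ Suc i) * T p (a * (q * q ^ n * q ^ Suc i))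
         + (q * q ^ n / q ^ Suc i) * T p (x * a * (q * q ^ n * q ^ n)) * T p (a * q ^ Suc i) * T p (q ^ Suc i) * T p (x / q)"
    by (rule core1[OF p0 p1]) (use a0 x0 q0 in auto)
  have g1: "x * a * (q ^ n * q ^ Suc i) = x * a * q ^ Suc n * q ^ i" by (simp add: argsimps)
  have g2: "x * (q ^ n / q ^ Suc i) = x * q ^ l" unfolding n using q0 by (simp add: argsimps field_simps)
  have g3: "a * (q * q ^ n) = a * q ^ Suc n" by simp
  have g4: "q * q ^ n / q ^ Suc i = q * q ^ l" unfolding n using q0 by (simp add: argsimps field_simps)
  have g5: "a * (q * q ^ n * q ^ Suc i) = a * q ^ Suc (Suc n) * q ^ i" by (simp add: argsimps)
  have g6: "x * a * (q * q ^ n * q ^ n) = x * a * q ^ (2 * n + 1)" by (simp add: argsimps)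
  have g7: "T p (q ^ Suc i) = T p (q * q ^ i)" by simp
  have core': "T p (x * a * q ^ Suc n * q ^ i) * T p (x * q ^ l) * T p (a * q ^ Suc n) * T p (q * q ^ n)
       = T p (x * q ^ n) * T p (x * a * q ^ n) * T p (q * q ^ l) * T p (a * q ^ Suc (Suc n) * q ^ i)
         + (q * q ^ l) * T p (x * a * q ^ (2 * n + 1)) * T p (a * q ^ Suc i) * T p (q * q ^ i) * T p (x / q)"
    using core unfolding g1 g2 g3 g4 g5 g6 g7 .
  have qq: "q ^ n / q ^ i = q * q ^ l" unfolding n using q0 by (simp add: argsimps field_simps)
  have "T p (x * a * q ^ Suc n * q ^ i) * T p (x * q ^ l) / (T p (a * q ^ Suc (Suc n) * q ^ i) * T p (q * q ^ l))
     = \<alpha> n * (T p (x * a * q ^ n) / T p (a * q ^ Suc n)) + q ^ n / q ^ i * T p (a * q ^ Suc i) * T p (q * q ^ i)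
      * T p (x * a * q ^ (2 * n + 1)) * T p (x / q) / (T p (a * q ^ Suc n) * T p (q * q ^ n) * T p (a * q ^ Suc (Suc n) * q ^ i) * T p (q * q ^ l))"
    unfolding \<alpha>_def qq using nzs core' by (simp add: field_simps)
  then show ?thesis unfolding X1 X2 X3 by (simp add: distrib_left)
qed

lemma Lclo: "ftc p q a b c d (Suc n) = \<alpha> n * ftc p q a b c d n + \<beta> n * ftc p q (a * q ^ 2) (b * q) (c * q) (d * q) n"
proof -
  have h1: "E (a * q ^ 2 * q) n = E (a * q) n * T p (a * q * q ^ n) * T p (a * q * q ^ Suc n) / (T p (a * q) * T p (a * q * q))"
  proof -
    have "E (a * q ^ 2 * q) n = E (a * q * q ^ 2) n" by (simp add: argsimps)
    moreover have "T p (a * q * q) \<noteq> 0" using gA[of 2] by (simp add: argsimps)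
    ultimately show ?thesis using Eq2[of "a * q" n] Taq by (simp add: field_simps)
  qed
  have h2: "E (a * q ^ 2 * q / (b * q * (c * q))) n = E (a * q / (b * c)) n" using q0 by (simp add: argsimps)
  have h3: "E (a * q ^ 2 * q / (b * q * (d * q))) n = E (a * q / (b * d)) n" using q0 by (simp add: argsimps)
  have h4: "E (a * q ^ 2 * q / (c * q * (d * q))) n = E (a * q / (c * d)) n" using q0 by (simp add: argsimps)
  have h5: "E (a * q ^ 2 * q / (b * q)) n = E (a * q / b * q) n" using q0 by (simp add: argsimps)
  have h6: "E (a * q ^ 2 * q / (c * q)) n = E (a * q / c * q) n" using q0 by (simp add: argsimps)
  have h7: "E (a * q ^ 2 * q / (d * q)) n = E (a * q / d * q) n" using q0 by (simp add: argsimps)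
  have sb: "E (a * q / b * q) n = E (a * q / b) n * T p (a * q / b * q ^ n) / T p (a * q / b)" by (rule Eshift[OF TB])
  have sc: "E (a * q / c * q) n = E (a * q / c) n * T p (a * q / c * q ^ n) / T p (a * q / c)" by (rule Eshift[OF TC])
  have sd: "E (a * q / d * q) n = E (a * q / d) n * T p (a * q / d * q ^ n) / T p (a * q / d)" by (rule Eshift[OF TD])
  have b1: "T p (a * q ^ Suc n) = T p (a * q * q ^ n)" by (simp add: argsimps)
  have b2: "T p (a * q ^ Suc (Suc n)) = T p (a * q * q ^ Suc n)" by (simp add: argsimps)
  have b3: "T p (a * q ^ 2) = T p (a * q * q)" by (simp add: argsimps)
  have core: "T p (a * q * q ^ n) * T p (a * q * q ^ n / (b * c)) * T p (a * q * q ^ n / (b * d)) * T p (a * q * q ^ n / (c * d))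
       = T p (a * q * q ^ n / (b * c * d)) * T p (a * q * q ^ n / b) * T p (a * q * q ^ n / c) * T p (a * q * q ^ n / d)
         + a * q * q ^ n / (b * c * d) * T p b * T p c * T p d * T p (a * q * q ^ n * (a * q * q ^ n) / (b * c * d))"
    by (rule core2[OF p0 p1]) (use a0 b0 c0 d0 q0 in auto)
  have xe: "x = a * q / (b * c * d)" using rel b0 c0 d0 by (simp add: field_simps)
  have k1: "a * q * q ^ n / (b * c) = a * q / (b * c) * q ^ n" by simp
  have k2: "a * q * q ^ n / (b * d) = a * q / (b * d) * q ^ n" by simp
  have k3: "a * q * q ^ n / (c * d) = a * q / (c * d) * q ^ n" by simp
  have k4: "a * q * q ^ n / (b * c * d) = x * q ^ n" unfolding xe by simp
  have k5: "a * q * q ^ n / b = a * q / b * q ^ n" by simp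
  have k6: "a * q * q ^ n / c = a * q / c * q ^ n" by simp
  have k7: "a * q * q ^ n / d = a * q / d * q ^ n" by simp
  have k8: "a * q * q ^ n * (a * q * q ^ n) / (b * c * d) = x * a * q ^ (2 * n + 1)" unfolding xe by (simp add: argsimps)
  have core': "T p (a * q * q ^ n) * T p (a * q / (b * c) * q ^ n) * T p (a * q / (b * d) * q ^ n) * T p (a * q / (c * d) * q ^ n)
       = T p (x * q ^ n) * T p (a * q / b * q ^ n) * T p (a * q / c * q ^ n) * T p (a * q / d * q ^ n)
         + x * q ^ n * T p b * T p c * T p d * T p (x * a * q ^ (2 * n + 1))"
    using core unfolding k1 k2 k3 k4 k5 k6 k7 k8 .
  have nzs: "E q n \<noteq> 0" "E (a * q / b) n \<noteq> 0" "E (a * q / c) n \<noteq> 0" "E (a * q / d) n \<noteq> 0"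
    "T p (q * q ^ n) \<noteq> 0" "T p (a * q / b * q ^ n) \<noteq> 0" "T p (a * q / c * q ^ n) \<noteq> 0" "T p (a * q / d * q ^ n) \<noteq> 0"
    "T p (a * q) \<noteq> 0" "T p (a * q / b) \<noteq> 0" "T p (a * q / c) \<noteq> 0" "T p (a * q / d) \<noteq> 0"
    "T p (a * q * q ^ n) \<noteq> 0" "T p (a * q * q ^ Suc n) \<noteq> 0" "T p (a * q * q) \<noteq> 0"
    using EQ[of n] EB[of n] EC[of n] ED[of n] gQ[of n] gB[of n] gC[of n] gD[of n] Taq TB TC TD
    apply simp_all
    using gA[of "Suc n"] gA[of "Suc (Suc n)"] gA[of 2] by (simp_all add: argsimps)
  have e1: "ftc p q a b c d (Suc n) = ftc p q a b c d n * (T p (a * q * q ^ n) * T p (a * q / (b * c) * q ^ n) * T p (a * q / (b * d) * q ^ n) * T p (a * q / (c * d) * q ^ n)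
       / (T p (q * q ^ n) * T p (a * q / b * q ^ n) * T p (a * q / c * q ^ n) * T p (a * q / d * q ^ n)))"
    unfolding ftc_def ESuc using nzs by (simp add: field_simps)
  have e2: "\<beta> n * ftc p q (a * q ^ 2) (b * q) (c * q) (d * q) n = ftc p q a b c d n *
      (x * q ^ n * T p b * T p c * T p d * T p (x * a * q ^ (2 * n + 1))
       / (T p (q * q ^ n) * T p (a * q / b * q ^ n) * T p (a * q / c * q ^ n) * T p (a * q / d * q ^ n)))"
    unfolding ftc_def \<beta>_def h1 h2 h3 h4 h5 h6 h7 sb sc sd b1 b2 b3 using nzs by (simp add: field_simps)
  have e3: "\<alpha> n * ftc p q a b c d n = ftc p q a b c d n * (T p (x * q ^ n) / T p (q * q ^ n))"
    unfolding \<alpha>_def by simp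
  have R: "T p (a * q * q ^ n) * T p (a * q / (b * c) * q ^ n) * T p (a * q / (b * d) * q ^ n) * T p (a * q / (c * d) * q ^ n)
       / (T p (q * q ^ n) * T p (a * q / b * q ^ n) * T p (a * q / c * q ^ n) * T p (a * q / d * q ^ n))
     = T p (x * q ^ n) / T p (q * q ^ n) + x * q ^ n * T p b * T p c * T p d * T p (x * a * q ^ (2 * n + 1))
       / (T p (q * q ^ n) * T p (a * q / b * q ^ n) * T p (a * q / c * q ^ n) * T p (a * q / d * q ^ n))"
    using core' nzs by (simp add: field_simps)
  show ?thesis unfolding e1 e2 e3 R by (simp add: distrib_left)
qed
end

theorem FT:
  fixes p q :: complex
  assumes p0: "0 < norm p" and p1: "norm p < 1" and q0: "q \<noteq> 0"
  shows "\<And>a b c d x. a \<noteq> 0 \<Longrightarrow> b \<noteq> 0 \<Longrightarrow> c \<noteq> 0 \<Longrightarrow> d \<noteq> 0 \<Longrightarrow> x \<noteq> 0 \<Longrightarrow> b * c * d * x = a * q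
    \<Longrightarrow> (\<And>i. etheta (a * q ^ i) p \<noteq> 0) \<Longrightarrow> (\<And>i. etheta (q * q ^ i) p \<noteq> 0)
    \<Longrightarrow> (\<And>i. etheta (a * q / b * q ^ i) p \<noteq> 0) \<Longrightarrow> (\<And>i. etheta (a * q / c * q ^ i) p \<noteq> 0)
    \<Longrightarrow> (\<And>i. etheta (a * q / d * q ^ i) p \<noteq> 0)
    \<Longrightarrow> (\<Sum>j\<le>n. ftt p q a b c d x n j) = ftc p q a b c d n"
proof (induction n)
  case 0
  have "etheta a p \<noteq> 0" using "0.prems"(7)[of 0] by simp
  then show ?case unfolding ftt_def ftc_def by simp
next
  case (Suc n a b c d x)
  note h = Suc.prems
  have h': "a * q ^ 2 \<noteq> 0" "b * q \<noteq> 0" "c * q \<noteq> 0" "d * q \<noteq> 0" "x / q \<noteq> 0"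
    using h q0 by auto
  have rel': "b * q * (c * q) * (d * q) * (x / q) = a * q ^ 2 * q"
    using h(6) q0 by (simp add: field_simps power2_eq_square)
  have gA': "etheta (a * q ^ 2 * q ^ i) p \<noteq> 0" for i using h(7)[of "2 + i"] by (simp add: power_add mult.assoc power2_eq_square)
  have gB': "etheta (a * q ^ 2 * q / (b * q) * q ^ i) p \<noteq> 0" for i
  proof -
    have "a * q ^ 2 * q / (b * q) * q ^ i = a * q / b * q ^ Suc i" using q0 by (simp add: field_simps power2_eq_square)
    then show ?thesis using h(9)[of "Suc i"] by simp
  qed
  have gC': "etheta (a * q ^ 2 * q / (c * q) * q ^ i) p \<noteq> 0" for i
  proof -
    have "a * q ^ 2 * q / (c * q) * q ^ i = a * q / c * q ^ Suc i" using q0 by (simp add: field_simps power2_eq_square)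
    then show ?thesis using h(10)[of "Suc i"] by simp
  qed
  have gD': "etheta (a * q ^ 2 * q / (d * q) * q ^ i) p \<noteq> 0" for i
  proof -
    have "a * q ^ 2 * q / (d * q) * q ^ i = a * q / d * q ^ Suc i" using q0 by (simp add: field_simps power2_eq_square)
    then show ?thesis using h(11)[of "Suc i"] by simp
  qed
  have IH1: "(\<Sum>j\<le>n. ftt p q a b c d x n j) = ftc p q a b c d n"
    by (rule Suc.IH[OF h])
  have IH2: "(\<Sum>j\<le>n. ftt p q (a * q ^ 2) (b * q) (c * q) (d * q) (x / q) n j) = ftc p q (a * q ^ 2) (b * q) (c * q) (d * q) n"
    by (rule Suc.IH[OF h' rel' gA' h(8) gB' gC' gD'])
  note ctx = p0 p1 q0 h
  define f where "f j = ftt p q a b c d x (Suc n) j" for j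
  define g where "g j = ftt p q a b c d x n j" for j
  define hh where "hh j = ftt p q (a * q ^ 2) (b * q) (c * q) (d * q) (x / q) n j" for j
  define al where "al = \<alpha> p q x n"
  define be where "be = \<beta> p q a b c d x n"
  have f0: "f 0 = al * g 0" unfolding f_def g_def al_def by (rule L0[OF ctx])
  have fl: "f (Suc n) = be * hh n" unfolding f_def hh_def be_def by (rule Llast[OF ctx])
  have fm: "f (Suc i) = al * g (Suc i) + be * hh i" if "i < n" for i
    unfolding f_def g_def hh_def al_def be_def by (rule Lmid[OF ctx that])
  have "(\<Sum>j\<le>Suc n. f j) = f 0 + (\<Sum>i\<le>n. f (Suc i))" by (rule sum.atMost_Suc_shift)
  also have "(\<Sum>i\<le>n. f (Suc i)) = (\<Sum>i<n. f (Suc i)) + f (Suc n)" by (metis lessThan_Suc_atMost sum.lessThan_Suc)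
  also have "(\<Sum>i<n. f (Suc i)) = al * (\<Sum>i<n. g (Suc i)) + be * (\<Sum>i<n. hh i)"
    using fm by (simp add: sum.distrib sum_distrib_left)
  also have "f 0 + (al * (\<Sum>i<n. g (Suc i)) + be * (\<Sum>i<n. hh i) + f (Suc n))
      = al * (g 0 + (\<Sum>i<n. g (Suc i))) + be * ((\<Sum>i<n. hh i) + hh n)"
    unfolding f0 fl by (simp add: algebra_simps)
  also have "g 0 + (\<Sum>i<n. g (Suc i)) = (\<Sum>j\<le>n. g j)" by (rule sum.atMost_shift[symmetric])
  also have "(\<Sum>i<n. hh i) + hh n = (\<Sum>j\<le>n. hh j)" by (metis lessThan_Suc_atMost sum.lessThan_Suc)
  finally show ?case
    unfolding f_def[symmetric] IH1[unfolded g_def[symmetric]] IH2[unfolded hh_def[symmetric]] al_def be_def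
    Lclo[OF ctx] by simp
qed

lemma Mmat_le: "m \<le> N \<Longrightarrow> Mmat p q N m a k =
        (epoch p q k (N + m) * epoch p q (k / a) (N - m))
        / (epoch p q (q * a) (N + m) * epoch p q q (N - m))
        * (etheta (a * q ^ (2 * m)) p / etheta a p) * a ^ (N - m)"
  unfolding Mmat_def by simp

context
  fixes p q a k t b c :: complex and N m L :: nat
  assumes p0: "0 < norm p" and p1: "norm p < 1" and q0: "q \<noteq> 0"
    and a0: "a \<noteq> 0" and k0: "k \<noteq> 0" and t0: "t \<noteq> 0" and b0: "b \<noteq> 0" and c0: "c \<noteq> 0"
    and rel: "k * b * c = q * a * t"
    and gq: "\<And>j. etheta (q * q ^ j) p \<noteq> 0"
    and ga: "\<And>j. etheta (a * q ^ j) p \<noteq> 0"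
    and gt: "\<And>j. etheta (t * q ^ j) p \<noteq> 0"
    and gab: "\<And>j. etheta (a * q / b * q ^ j) p \<noteq> 0"
    and gac: "\<And>j. etheta (a * q / c * q ^ j) p \<noteq> 0"
    and gtb: "\<And>j. etheta (t * q / b * q ^ j) p \<noteq> 0"
    and gtc: "\<And>j. etheta (t * q / c * q ^ j) p \<noteq> 0"
    and NmL: "N = m + L"
begin

abbreviation "EE \<equiv> epoch p q"
lemmas asimps = algebra_simps power_add power2_eq_square mult_2 mult_2_right

lemma FTinst: "(\<Sum>j\<le>L. ftt p q (a * q ^ (2 * m)) (b * q ^ m) (c * q ^ m) (a / t) (k / a) L j)
   = ftc p q (a * q ^ (2 * m)) (b * q ^ m) (c * q ^ m) (a / t) L"
proof (rule FT[OF p0 p1 q0])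
  show "a * q ^ (2 * m) \<noteq> 0" "b * q ^ m \<noteq> 0" "c * q ^ m \<noteq> 0" "a / t \<noteq> 0" "k / a \<noteq> 0"
    using a0 b0 c0 t0 k0 q0 by auto
  show "b * q ^ m * (c * q ^ m) * (a / t) * (k / a) = a * q ^ (2 * m) * q"
  proof -
    have "b * q ^ m * (c * q ^ m) * (a / t) * (k / a) = (k * b * c) * q ^ (2 * m) / t"
      using a0 t0 by (simp add: field_simps power_add mult_2 mult_2_right)
    also have "\<dots> = a * q ^ (2 * m) * q" unfolding rel using t0 by (simp add: field_simps)
    finally show ?thesis .
  qed
  fix i
  show "etheta (a * q ^ (2 * m) * q ^ i) p \<noteq> 0" using ga[of "2 * m + i"] by (simp add: power_add mult.assoc)
  show "etheta (q * q ^ i) p \<noteq> 0" by (rule gq)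
  show "etheta (a * q ^ (2 * m) * q / (b * q ^ m) * q ^ i) p \<noteq> 0"
  proof -
    have "a * q ^ (2 * m) * q / (b * q ^ m) * q ^ i = a * q / b * q ^ (m + i)" using q0 by (simp add: field_simps asimps)
    then show ?thesis using gab[of "m + i"] by simp
  qed
  show "etheta (a * q ^ (2 * m) * q / (c * q ^ m) * q ^ i) p \<noteq> 0"
  proof -
    have "a * q ^ (2 * m) * q / (c * q ^ m) * q ^ i = a * q / c * q ^ (m + i)" using q0 by (simp add: field_simps asimps)
    then show ?thesis using gac[of "m + i"] by simp
  qed
  show "etheta (a * q ^ (2 * m) * q / (a / t) * q ^ i) p \<noteq> 0"
  proof -
    have "a * q ^ (2 * m) * q / (a / t) * q ^ i = t * q ^ (2 * m + 1 + i)" using q0 a0 t0 by (simp add: field_simps asimps)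
    then show ?thesis using gt[of "2 * m + 1 + i"] by simp
  qed
qed


lemma EEnz: "(\<And>i. etheta (z * q ^ i) p \<noteq> 0) \<Longrightarrow> EE z n \<noteq> 0" by (rule Enz) simp

lemma EEgen: assumes "\<And>j. etheta (z * q ^ j) p \<noteq> 0" shows "EE (z * q ^ s) n \<noteq> 0"
  by (rule Enz) (metis assms mult.assoc power_add)

lemma EEqa: "EE (q * a * q ^ s) n \<noteq> 0"
proof -
  have "q * a * q ^ s = a * q ^ Suc s" by simp
  then show ?thesis using EEgen[OF ga, of "Suc s" n] by (simp add: mult_ac)
qed
lemma EEqt: "EE (q * t * q ^ s) n \<noteq> 0"
proof -
  have "q * t * q ^ s = t * q ^ Suc s" by simp
  then show ?thesis using EEgen[OF gt, of "Suc s" n] by (simp add: mult_ac)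
qed
lemma EEab: "EE (a * q / b * q ^ s) n \<noteq> 0" by (rule EEgen[OF gab])
lemma EEac: "EE (a * q / c * q ^ s) n \<noteq> 0" by (rule EEgen[OF gac])
lemma EEtb: "EE (t * q / b * q ^ s) n \<noteq> 0" by (rule EEgen[OF gtb])
lemma EEtc: "EE (t * q / c * q ^ s) n \<noteq> 0" by (rule EEgen[OF gtc])
lemma EEq: "EE q n \<noteq> 0" using EEgen[OF gq, of 0 n] by simp

definition "KK = EE k (N + m) / EE (q * a) (N + m) * (etheta (a * q ^ (2 * m)) p / etheta a p) * a ^ L
   * (EE b m * EE c m / (EE (a * q / b) m * EE (a * q / c) m) * (a * q / (b * c)) ^ m)
   * (EE a (2 * m) / EE (q * t) (2 * m)) * (etheta (t * q ^ (2 * m)) p / etheta t p)"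

lemma term_eq:
  assumes j: "j \<le> L"
  shows "Mmat p q N (m + j) a k * Dmat p q (m + j) a b c * Mmat p q (m + j) m t a
       = KK * ftt p q (a * q ^ (2 * m)) (b * q ^ m) (c * q ^ m) (a / t) (k / a) L j"
proof -
  have n1: "N + (m + j) = (N + m) + j" "N - (m + j) = L - j" "m + j + m = 2 * m + j" "m + j - m = j"
    using NmL j by auto
  have le1: "m + j \<le> N" "m \<le> m + j" using NmL j by auto
  have u1: "etheta (a * q ^ (2 * m) * q ^ (2 * j)) p = etheta (a * q ^ (2 * (m + j))) p" by (simp add: asimps)
  have u2: "EE (k / a * (a * q ^ (2 * m)) * q ^ L) j = EE (k * q ^ (N + m)) j" using a0 unfolding NmL by (simp add: asimps)
  have u3: "EE (a * q ^ (2 * m) * q / (b * q ^ m)) j = EE (a * q / b * q ^ m) j" using q0 b0 by (simp add: asimps field_simps)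
  have u4: "EE (a * q ^ (2 * m) * q / (c * q ^ m)) j = EE (a * q / c * q ^ m) j" using q0 c0 by (simp add: asimps field_simps)
  have u5: "EE (a * q ^ (2 * m) * q / (a / t)) j = EE (q * t * q ^ (2 * m)) j" using a0 t0 by (simp add: asimps field_simps)
  have u6: "EE (a * q ^ (2 * m) * q ^ Suc L) j = EE (q * a * q ^ (N + m)) j" unfolding NmL by (simp add: asimps)
  have kt: "a * q / (b * c) = k / t" using rel b0 c0 t0 by (simp add: field_simps)
  have w1: "a ^ (L - j) = a ^ L / a ^ j" using a0 j by (simp add: power_diff)
  have nzs: "etheta a p \<noteq> 0" "etheta (a * q ^ (2 * m)) p \<noteq> 0" "EE (q * a) (N + m) \<noteq> 0" "EE (q * a * q ^ (N + m)) j \<noteq> 0"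
     "EE q (L - j) \<noteq> 0" "EE (a * q / b) m \<noteq> 0" "EE (a * q / c) m \<noteq> 0" "EE (a * q / b * q ^ m) j \<noteq> 0"
     "EE (a * q / c * q ^ m) j \<noteq> 0" "EE (q * t) (2 * m) \<noteq> 0" "EE (q * t * q ^ (2 * m)) j \<noteq> 0" "EE q j \<noteq> 0"
     "etheta t p \<noteq> 0" "a ^ j \<noteq> 0" "t ^ j \<noteq> 0" "a \<noteq> 0" "t \<noteq> 0" "b \<noteq> 0" "c \<noteq> 0" "k \<noteq> 0"
    using ga[of 0] ga[of "2 * m"] EEqa[of 0 "N + m"] EEqa[of "N + m" j] EEq EEab[of 0 m] EEac[of 0 m] EEab[of m j] EEac[of m j]
      EEqt[of 0 "2 * m"] EEqt[of "2 * m" j] gt[of 0] a0 t0 b0 c0 k0 by simp_all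
  show ?thesis
    unfolding Mmat_le[OF le1(1)] Mmat_le[OF le1(2)] Dmat_def ftt_def KK_def n1 u1 u2 u3 u4 u5 u6 kt w1
    unfolding Eadd[of p q _ "N + m" j] Eadd[of p q _ m j] Eadd[of p q _ "2 * m" j] power_add power_divide
    using nzs by (simp add: field_simps)
qed

lemma rhs_eq:
  "Dmat p q N k (q * t / c) (q * t / b) * Mmat p q N m t k * Dmat p q m t b c
     = KK * ftc p q (a * q ^ (2 * m)) (b * q ^ m) (c * q ^ m) (a / t) L"
proof -
  have le1: "m \<le> N" using NmL by simp
  have NL: "N - m = L" "N + m = 2 * m + L" using NmL by auto
  have v1: "EE (a * q ^ (2 * m) * q / (b * q ^ m * (c * q ^ m))) L = EE (k / t) L"
  proof -
    have "a * q ^ (2 * m) * q / (b * q ^ m * (c * q ^ m)) = a * q / (b * c)" using q0 by (simp add: asimps field_simps)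
    also have "\<dots> = k / t" using rel b0 c0 t0 by (simp add: field_simps)
    finally show ?thesis by simp
  qed
  have v2: "EE (a * q ^ (2 * m) * q / (b * q ^ m * (a / t))) L = EE (q * t / b * q ^ m) L"
    using q0 a0 t0 b0 by (simp add: asimps field_simps)
  have v3: "EE (a * q ^ (2 * m) * q / (c * q ^ m * (a / t))) L = EE (q * t / c * q ^ m) L"
    using q0 a0 t0 c0 by (simp add: asimps field_simps)
  have v4: "EE (a * q ^ (2 * m) * q / (b * q ^ m)) L = EE (a * q / b * q ^ m) L" using q0 b0 by (simp add: asimps field_simps)
  have v5: "EE (a * q ^ (2 * m) * q / (c * q ^ m)) L = EE (a * q / c * q ^ m) L" using q0 c0 by (simp add: asimps field_simps)
  have v6: "EE (a * q ^ (2 * m) * q / (a / t)) L = EE (q * t * q ^ (2 * m)) L" using a0 t0 by (simp add: asimps field_simps)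
  have w1: "EE (k * q / (q * t / c)) N = EE (a * q / b) N"
  proof -
    have "k * q / (q * t / c) = a * q / b" using rel q0 t0 b0 c0 by (simp add: field_simps)
    then show ?thesis by simp
  qed
  have w2: "EE (k * q / (q * t / b)) N = EE (a * q / c) N"
  proof -
    have "k * q / (q * t / b) = a * q / c" using rel q0 t0 b0 c0 by (simp add: field_simps)
    then show ?thesis by simp
  qed
  have w3: "k * q / (q * t / c * (q * t / b)) = a / t"
    using rel q0 t0 b0 c0 by (simp add: field_simps power2_eq_square)
  have w4: "EE (t * q / b) m = EE (q * t / b) m" "EE (t * q / c) m = EE (q * t / c) m" by (simp_all add: mult.commute)
  have ach: "EE (a * q ^ (2 * m) * q) L = etheta a p * EE (q * a) (N + m) / (EE a (2 * m) * etheta (a * q ^ (2 * m)) p)"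
  proof -
    have h1: "EE a (2 * m + Suc L) = EE a (2 * m) * (etheta (a * q ^ (2 * m)) p * EE (a * q ^ (2 * m) * q) L)"
      unfolding Eadd Ehead ..
    have h2: "EE a (Suc (N + m)) = etheta a p * EE (q * a) (N + m)" using Ehead[of p q a "N + m"] by (simp add: mult.commute)
    have h3: "2 * m + Suc L = Suc (N + m)" using NmL by simp
    have h4: "EE a (2 * m) * etheta (a * q ^ (2 * m)) p \<noteq> 0" using EEgen[OF ga, of 0 "2 * m"] ga[of "2 * m"] by simp
    have "EE a (2 * m) * etheta (a * q ^ (2 * m)) p * EE (a * q ^ (2 * m) * q) L = etheta a p * EE (q * a) (N + m)"
      using h1[unfolded h3] h2 by (simp add: mult.assoc)
    then show ?thesis using h4 by (simp add: field_simps)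
  qed
  have nzs: "etheta a p \<noteq> 0" "etheta (a * q ^ (2 * m)) p \<noteq> 0" "EE (q * a) (N + m) \<noteq> 0" "EE a (2 * m) \<noteq> 0"
     "EE q L \<noteq> 0" "EE (a * q / b) m \<noteq> 0" "EE (a * q / c) m \<noteq> 0" "EE (a * q / b * q ^ m) L \<noteq> 0"
     "EE (a * q / c * q ^ m) L \<noteq> 0" "EE (q * t) (2 * m) \<noteq> 0" "EE (q * t * q ^ (2 * m)) L \<noteq> 0"
     "EE (q * t / b) m \<noteq> 0" "EE (q * t / c) m \<noteq> 0"
     "etheta t p \<noteq> 0" "a \<noteq> 0" "t \<noteq> 0" "b \<noteq> 0" "c \<noteq> 0" "k \<noteq> 0" "q \<noteq> 0"
    using ga[of 0] ga[of "2 * m"] EEqa[of 0 "N + m"] EEgen[OF ga, of 0 "2 * m"] EEq EEab[of 0 m] EEac[of 0 m] EEab[of m L] EEac[of m L]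
      EEqt[of 0 "2 * m"] EEqt[of "2 * m" L] EEtb[of 0 m] EEtc[of 0 m] gt[of 0] a0 t0 b0 c0 k0 q0
    by (simp_all add: mult.commute)
  have s1: "EE (q * t / c) N = EE (q * t / c) m * EE (q * t / c * q ^ m) L" unfolding NmL by (rule Eadd)
  have s2: "EE (q * t / b) N = EE (q * t / b) m * EE (q * t / b * q ^ m) L" unfolding NmL by (rule Eadd)
  have s3: "EE (a * q / b) N = EE (a * q / b) m * EE (a * q / b * q ^ m) L" unfolding NmL by (rule Eadd)
  have s4: "EE (a * q / c) N = EE (a * q / c) m * EE (a * q / c * q ^ m) L" unfolding NmL by (rule Eadd)
  have s5: "EE (q * t) (N + m) = EE (q * t) (2 * m) * EE (q * t * q ^ (2 * m)) L" unfolding NL by (rule Eadd)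
  have pw: "(a / t) ^ N * t ^ L * (t * q / (b * c)) ^ m = a ^ L * (a * q / (b * c)) ^ m"
    unfolding NmL power_add power_divide power_mult_distrib using t0 by (simp add: field_simps)
  show ?thesis
    unfolding Dmat_def Mmat_le[OF le1] ftc_def KK_def v1 v2 v3 v4 v5 v6 w1 w2 w3 w4 ach NL(1) s1 s2 s3 s4 s5
    using nzs pw by (simp add: field_simps)
qed
end

theorem mainTheorem4:
  fixes p q a k t b c :: complex and N m :: nat
  assumes p: "0 < norm p" "norm p < 1"
    and q: "0 < norm q" "norm q < 1"
    and nz: "a \<noteq> 0" "k \<noteq> 0" "t \<noteq> 0" "b \<noteq> 0" "c \<noteq> 0"
    and rel: "k * b * c = q * a * t"
    and generic_q: "\<forall>j::nat. etheta (q ^ (Suc j)) p \<noteq> 0"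
    and generic: "\<forall>x \<in> {a, t, a * q / b, a * q / c, t * q / b, t * q / c,
                          k * b / t, k * c / t}.
                    \<forall>j::nat. etheta (x * q ^ j) p \<noteq> 0"
    and mN: "m \<le> N"
  shows "(\<Sum>n = m..N. Mmat p q N n a k * Dmat p q n a b c * Mmat p q n m t a)
       = Dmat p q N k (q * t / c) (q * t / b) * Mmat p q N m t k * Dmat p q m t b c"
proof -
  define L where "L = N - m"
  have NmL: "N = m + L" unfolding L_def using mN by simp
  have q0: "q \<noteq> 0" using q by auto
  have gq: "\<And>j. etheta (q * q ^ j) p \<noteq> 0" using generic_q by simp
  have ga: "\<And>j. etheta (a * q ^ j) p \<noteq> 0" using generic by simp
  have gt: "\<And>j. etheta (t * q ^ j) p \<noteq> 0" using generic by simp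
  have gab: "\<And>j. etheta (a * q / b * q ^ j) p \<noteq> 0" using generic by blast
  have gac: "\<And>j. etheta (a * q / c * q ^ j) p \<noteq> 0" using generic by blast
  have gtb: "\<And>j. etheta (t * q / b * q ^ j) p \<noteq> 0" using generic by blast
  have gtc: "\<And>j. etheta (t * q / c * q ^ j) p \<noteq> 0" using generic by blast
  note ctx = p q0 nz rel gq ga gt gab gac gtb gtc NmL
  have "(\<Sum>n = m..N. Mmat p q N n a k * Dmat p q n a b c * Mmat p q n m t a)
      = (\<Sum>j = 0..L. Mmat p q N (j + m) a k * Dmat p q (j + m) a b c * Mmat p q (j + m) m t a)"
    unfolding NmL using sum.shift_bounds_cl_nat_ivl[of "\<lambda>n. Mmat p q (m + L) n a k * Dmat p q n a b c * Mmat p q n m t a" 0 m L]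
    by (simp add: add.commute)
  also have "\<dots> = (\<Sum>j\<le>L. KK p q a k t b c N m L * ftt p q (a * q ^ (2 * m)) (b * q ^ m) (c * q ^ m) (a / t) (k / a) L j)"
    unfolding atLeast0AtMost
  proof (rule sum.cong[OF refl])
    fix j assume "j \<in> {..L}"
    then have j: "j \<le> L" by simp
    have jm: "j + m = m + j" by simp
    show "Mmat p q N (j + m) a k * Dmat p q (j + m) a b c * Mmat p q (j + m) m t a
      = KK p q a k t b c N m L * ftt p q (a * q ^ (2 * m)) (b * q ^ m) (c * q ^ m) (a / t) (k / a) L j"
      unfolding jm by (rule term_eq[OF ctx j])
  qed
  also have "\<dots> = KK p q a k t b c N m L * ftc p q (a * q ^ (2 * m)) (b * q ^ m) (c * q ^ m) (a / t) L"
    unfolding sum_distrib_left[symmetric] FTinst[OF ctx] ..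
  also have "\<dots> = Dmat p q N k (q * t / c) (q * t / b) * Mmat p q N m t k * Dmat p q m t b c"
    by (rule rhs_eq[OF ctx, symmetric])
  finally show ?thesis .
qed

end
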